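(* Let $\delta>0$ and let $n_\delta\in C^\infty(\mathbb{R})$ satisfy: $n_\delta(r)=r-2\delta$ for $r>\delta$; $n_\delta(r)=n_\delta(-r)$ for all $r$; $0\le n_\delta'(r)\le1$ for $r\ge0$; $0\le n_\delta''\le C_5/\delta$ for some constant $C_5>0$. Let $X=L^p(0,T;W_0^{1,p}(D))$ with dual $X'=L^{p'}(0,T;W^{-1,p'}(D))$, and let $u,v\in X$ with $u\ge0$, $v\ge0$ a.e. in $Q_T$. Let $\eta\in X'$ be nonnegative (i.e. $\langle\eta,\varphi\rangle_{X',X}\ge0$ for all $\varphi\in X$ with $\varphi\ge0$ a.e.) and satisfy $\langle\eta,u\rangle_{X',X}=0$. Then $n_\delta'(u-v)\in X$ and $$\langle\eta,n_\delta'(u-v)\rangle_{X',X}\le0.$$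
   Context: $D\subset\mathbb{R}^d$ is a bounded Lipschitz domain, $T>0$, $Q_T=(0,T)\times D$, $p\ge2$, $p'=p/(p-1)$; $W_0^{1,p}(D)$ is the closure of $C_c^\infty(D)$ in $W^{1,p}(D)$ and $W^{-1,p'}(D)$ its dual. *)

theory Defs
  imports "HOL-Analysis.Analysis"
begin

(* Locally near each boundary point, after choosing a unit "vertical" direction e,
   D is the region below the graph of a Lipschitz function gamma that only depends
   on the component orthogonal to e. *)
definition lipschitz_domain :: "'a::euclidean_space set \<Rightarrow> bool" where
  "lipschitz_domain D \<longleftrightarrow> open D \<and> bounded D \<and> D \<noteq> {} \<and>
     (\<forall>x0\<in>frontier D. \<exists>r>0. \<exists>e. norm e = 1 \<and> (\<exists>L \<gamma>.
        L-lipschitz_on UNIV (\<gamma> :: 'a \<Rightarrow> real) \<and>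
        (\<forall>y s. \<gamma> (y + s *\<^sub>R e) = \<gamma> y) \<and>
        D \<inter> ball x0 r = {y \<in> ball x0 r. y \<bullet> e < \<gamma> y}))"

fun dpart :: "('a::euclidean_space \<Rightarrow> real) \<Rightarrow> 'a list \<Rightarrow> 'a \<Rightarrow> real" where
  "dpart f [] = f"
| "dpart f (i # is) = (\<lambda>x. frechet_derivative (dpart f is) (at x) i)"

definition smooth_fun :: "('a::euclidean_space \<Rightarrow> real) \<Rightarrow> bool" where
  "smooth_fun f \<longleftrightarrow> (\<forall>is. set is \<subseteq> Basis \<longrightarrow> (\<forall>x. dpart f is differentiable (at x)))"

definition test_fun :: "'a::euclidean_space set \<Rightarrow> ('a \<Rightarrow> real) \<Rightarrow> bool" where
  "test_fun D \<phi> \<longleftrightarrow> smooth_fun \<phi> \<and> (\<exists>K. compact K \<and> K \<subseteq> D \<and> (\<forall>x. x \<notin> K \<longrightarrow> \<phi> x = 0))"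

definition grad :: "('a::euclidean_space \<Rightarrow> real) \<Rightarrow> 'a \<Rightarrow> 'a" where
  "grad \<phi> x = (\<Sum>i\<in>Basis. frechet_derivative \<phi> (at x) i *\<^sub>R i)"

definition Lp :: "'b measure \<Rightarrow> real \<Rightarrow> ('b \<Rightarrow> 'c::real_normed_vector) \<Rightarrow> bool" where
  "Lp M p f \<longleftrightarrow> f \<in> borel_measurable M \<and> integrable M (\<lambda>x. norm (f x) powr p)"

definition weak_grad :: "'a::euclidean_space set \<Rightarrow> ('a \<Rightarrow> real) \<Rightarrow> ('a \<Rightarrow> 'a) \<Rightarrow> bool" where
  "weak_grad D f g \<longleftrightarrow>
     (\<forall>\<phi>. test_fun D \<phi> \<longrightarrow> (\<forall>i\<in>Basis.
        (\<integral>x. f x * frechet_derivative \<phi> (at x) i \<partial>lebesgue_on D)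
        = - (\<integral>x. (g x \<bullet> i) * \<phi> x \<partial>lebesgue_on D)))"

definition W0 :: "'a::euclidean_space set \<Rightarrow> real \<Rightarrow> ('a \<Rightarrow> real) \<Rightarrow> ('a \<Rightarrow> 'a) \<Rightarrow> bool" where
  "W0 D p f g \<longleftrightarrow> Lp (lebesgue_on D) p f \<and> Lp (lebesgue_on D) p g \<and> weak_grad D f g \<and>
     (\<exists>\<phi>. (\<forall>k. test_fun D (\<phi> k)) \<and>
        (\<lambda>k. (\<integral>x. \<bar>\<phi> k x - f x\<bar> powr p \<partial>lebesgue_on D)
            + (\<integral>x. norm (grad (\<phi> k) x - g x) powr p \<partial>lebesgue_on D)) \<longlonglongrightarrow> 0)"

definition QT :: "real \<Rightarrow> 'a set \<Rightarrow> (real \<times> 'a) set" where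
  "QT T D = {0<..<T} \<times> D"

(* u \<in> X = L^p(0,T;W_0^{1,p}(D)), represented as a function on Q_T, with spatial
   weak gradient G *)
definition Xrep :: "'a::euclidean_space set \<Rightarrow> real \<Rightarrow> real \<Rightarrow> (real \<times> 'a \<Rightarrow> real) \<Rightarrow> (real \<times> 'a \<Rightarrow> 'a) \<Rightarrow> bool" where
  "Xrep D T p u G \<longleftrightarrow> Lp (lebesgue_on (QT T D)) p u \<and> Lp (lebesgue_on (QT T D)) p G \<and>
     (AE t in lebesgue_on {0<..<T}. W0 D p (\<lambda>x. u (t, x)) (\<lambda>x. G (t, x)))"

definition Xmem :: "'a::euclidean_space set \<Rightarrow> real \<Rightarrow> real \<Rightarrow> (real \<times> 'a \<Rightarrow> real) \<Rightarrow> bool" where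
  "Xmem D T p u \<longleftrightarrow> (\<exists>G. Xrep D T p u G)"

definition Xnorm :: "'a::euclidean_space set \<Rightarrow> real \<Rightarrow> real \<Rightarrow> (real \<times> 'a \<Rightarrow> real) \<Rightarrow> (real \<times> 'a \<Rightarrow> 'a) \<Rightarrow> real" where
  "Xnorm D T p u G = ((\<integral>z. \<bar>u z\<bar> powr p \<partial>lebesgue_on (QT T D))
                      + (\<integral>z. norm (G z) powr p \<partial>lebesgue_on (QT T D))) powr (1 / p)"

(* \<eta> \<in> X' : bounded linear functional on X; \<eta> u is the pairing <\<eta>,u>_{X',X} *)
definition Xdual :: "'a::euclidean_space set \<Rightarrow> real \<Rightarrow> real \<Rightarrow> ((real \<times> 'a \<Rightarrow> real) \<Rightarrow> real) \<Rightarrow> bool" where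
  "Xdual D T p \<eta> \<longleftrightarrow>
     (\<forall>u v a b. Xmem D T p u \<and> Xmem D T p v \<longrightarrow>
        \<eta> (\<lambda>z. a * u z + b * v z) = a * \<eta> u + b * \<eta> v) \<and>
     (\<exists>C. \<forall>u G. Xrep D T p u G \<longrightarrow> \<bar>\<eta> u\<bar> \<le> C * Xnorm D T p u G)"

definition smooth_real :: "(real \<Rightarrow> real) \<Rightarrow> bool" where
  "smooth_real f \<longleftrightarrow> (\<forall>k x. (deriv ^^ k) f differentiable (at x))"

end

theory Submission
  imports Defs
begin

section \<open>Smoothness closure\<close>

lemma dpart_append: "dpart f (xs @ ys) = dpart (dpart f ys) xs"
  by (induction xs) auto

lemma smooth_fun_partial:
  assumes "smooth_fun f" "i \<in> Basis"
  shows "smooth_fun (\<lambda>x. frechet_derivative f (at x) i)"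
  unfolding smooth_fun_def
proof (intro allI impI)
  fix "is" :: "'a list" and x assume "set is \<subseteq> Basis"
  then have "set (is @ [i]) \<subseteq> Basis" using assms(2) by auto
  then have "dpart f (is @ [i]) differentiable (at x)" using assms(1) unfolding smooth_fun_def by blast
  moreover have "dpart f (is @ [i]) = dpart (\<lambda>x. frechet_derivative f (at x) i) is"
    by (simp add: dpart_append)
  ultimately show "dpart (\<lambda>x. frechet_derivative f (at x) i) is differentiable (at x)" by simp
qed

lemma smooth_fun_diff:
  assumes "smooth_fun f" shows "f differentiable (at x)"
  using assms unfolding smooth_fun_def by (metis dpart.simps(1) empty_subsetI list.set(1))

lemma smooth_fun_const: "smooth_fun (\<lambda>x. c)"
proof -
  have "\<exists>d. dpart (\<lambda>x. c) is = (\<lambda>x. d)" for "is"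
  proof (induction "is")
    case Nil then show ?case by auto
  next
    case (Cons i "is")
    then obtain d where d: "dpart (\<lambda>x. c) is = (\<lambda>x. d)" by blast
    have "frechet_derivative (\<lambda>x::'a. d) (at x) = (\<lambda>_. 0)" for x
      by (metis frechet_derivative_at has_derivative_const)
    then show ?case by (auto simp: d)
  qed
  then show ?thesis unfolding smooth_fun_def
  proof (intro allI impI)
    fix "is" :: "'a list" and x
    assume "\<And>is. \<exists>d. dpart (\<lambda>x::'a. c) is = (\<lambda>x. d)"
    then obtain d where "dpart (\<lambda>x::'a. c) is = (\<lambda>x. d)" by blast
    then show "dpart (\<lambda>x. c) is differentiable at x" by simp
  qed
qed

inductive_set SA :: "('a::euclidean_space \<Rightarrow> real) set" where
  sm: "smooth_fun f \<Longrightarrow> f \<in> SA"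
| comp: "smooth_real g \<Longrightarrow> smooth_fun h \<Longrightarrow> (\<lambda>x. g (h x)) \<in> SA"
| mult: "f \<in> SA \<Longrightarrow> g \<in> SA \<Longrightarrow> (\<lambda>x. f x * g x) \<in> SA"
| add: "f \<in> SA \<Longrightarrow> g \<in> SA \<Longrightarrow> (\<lambda>x. f x + g x) \<in> SA"

lemma smooth_real_deriv: "smooth_real g \<Longrightarrow> smooth_real (deriv g)"
  unfolding smooth_real_def by (metis funpow_Suc_right o_apply)

lemma smooth_real_DERIV: "smooth_real g \<Longrightarrow> (g has_real_derivative deriv g x) (at x)"
  unfolding smooth_real_def by (metis DERIV_deriv_iff_real_differentiable funpow_0)

lemma SA_step:
  assumes "f \<in> SA"
  shows "(\<forall>x. f differentiable (at x)) \<and> (\<forall>i\<in>Basis. (\<lambda>x. frechet_derivative f (at x) i) \<in> SA)"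
  using assms
proof (induction rule: SA.induct)
  case (sm f)
  then show ?case by (auto intro: SA.sm smooth_fun_partial smooth_fun_diff)
next
  case (comp g h)
  have hd: "(h has_derivative frechet_derivative h (at x)) (at x)" for x
    using smooth_fun_diff[OF comp(2)] frechet_derivative_works by blast
  have gd: "(g has_derivative (\<lambda>t. t * deriv g y)) (at y)" for y
  proof -
    have "(\<lambda>t. t * deriv g y) = (*) (deriv g y)" by (auto simp: fun_eq_iff)
    then show ?thesis using smooth_real_DERIV[OF comp(1)] by (simp add: has_field_derivative_def)
  qed
  have cd: "((\<lambda>x. g (h x)) has_derivative (\<lambda>v. frechet_derivative h (at x) v * deriv g (h x))) (at x)" for x
    using diff_chain_at[OF hd gd] by (simp add: o_def)
  have eq: "(\<lambda>x. frechet_derivative (\<lambda>x. g (h x)) (at x) i) = (\<lambda>x. frechet_derivative h (at x) i * deriv g (h x))" for i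
    by (rule ext, simp only: frechet_derivative_at[OF cd, symmetric])
  show ?case
  proof (intro conjI allI ballI)
    show "(\<lambda>x. g (h x)) differentiable (at x)" for x using cd differentiable_def by blast
    fix i :: 'a assume i: "i \<in> Basis"
    show "(\<lambda>x. frechet_derivative (\<lambda>x. g (h x)) (at x) i) \<in> SA"
      unfolding eq
      by (intro SA.mult SA.sm SA.comp smooth_fun_partial comp smooth_real_deriv i)
  qed
next
  case (mult f g)
  have fd: "(f has_derivative frechet_derivative f (at x)) (at x)" for x
    using mult frechet_derivative_works by blast
  have gd: "(g has_derivative frechet_derivative g (at x)) (at x)" for x
    using mult frechet_derivative_works by blast
  have cd: "((\<lambda>x. f x * g x) has_derivative (\<lambda>v. f x * frechet_derivative g (at x) v + frechet_derivative f (at x) v * g x)) (at x)" for x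
    using has_derivative_mult[OF fd gd] .
  have eq: "(\<lambda>x. frechet_derivative (\<lambda>x. f x * g x) (at x) i) = (\<lambda>x. f x * frechet_derivative g (at x) i + frechet_derivative f (at x) i * g x)" for i
    by (rule ext, simp only: frechet_derivative_at[OF cd, symmetric])
  show ?case
  proof (intro conjI allI ballI)
    show "(\<lambda>x. f x * g x) differentiable (at x)" for x using cd differentiable_def by blast
    fix i :: 'a assume i: "i \<in> Basis"
    show "(\<lambda>x. frechet_derivative (\<lambda>x. f x * g x) (at x) i) \<in> SA"
      unfolding eq using mult i by (intro SA.add SA.mult) auto
  qed
next
  case (add f g)
  have fd: "(f has_derivative frechet_derivative f (at x)) (at x)" for x
    using add frechet_derivative_works by blast
  have gd: "(g has_derivative frechet_derivative g (at x)) (at x)" for x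
    using add frechet_derivative_works by blast
  have cd: "((\<lambda>x. f x + g x) has_derivative (\<lambda>v. frechet_derivative f (at x) v + frechet_derivative g (at x) v)) (at x)" for x
    using has_derivative_add[OF fd gd] .
  have eq: "(\<lambda>x. frechet_derivative (\<lambda>x. f x + g x) (at x) i) = (\<lambda>x. frechet_derivative f (at x) i + frechet_derivative g (at x) i)" for i
    by (rule ext, simp only: frechet_derivative_at[OF cd, symmetric])
  show ?case
  proof (intro conjI allI ballI)
    show "(\<lambda>x. f x + g x) differentiable (at x)" for x using cd differentiable_def by blast
    fix i :: 'a assume i: "i \<in> Basis"
    show "(\<lambda>x. frechet_derivative (\<lambda>x. f x + g x) (at x) i) \<in> SA"
      unfolding eq using add i by (intro SA.add) auto
  qed
qed

lemma SA_smooth: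
  assumes "f \<in> SA" shows "smooth_fun f"
proof -
  have "set is \<subseteq> Basis \<Longrightarrow> dpart f is \<in> SA" for "is"
  proof (induction "is")
    case Nil then show ?case using assms by simp
  next
    case (Cons i "is")
    then have "i \<in> Basis" "dpart f is \<in> SA" by auto
    then show ?case using SA_step[of "dpart f is"] by simp
  qed
  then show ?thesis unfolding smooth_fun_def
  proof (intro allI impI)
    fix "is" :: "'a list" and x
    assume "\<And>is. set is \<subseteq> Basis \<Longrightarrow> dpart f is \<in> SA" "set is \<subseteq> Basis"
    then have "dpart f is \<in> SA" by blast
    from SA_step[OF this] show "dpart f is differentiable at x" by (rule conjunct1[THEN spec])
  qed
qed

lemma smooth_fun_lin:
  assumes "smooth_fun f" "smooth_fun g"
  shows "smooth_fun (\<lambda>x. a * f x + b * g x)"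
  by (rule SA_smooth, intro SA.add SA.mult; rule SA.sm; intro assms smooth_fun_const)

lemma smooth_fun_mult:
  assumes "smooth_fun f" "smooth_fun g"
  shows "smooth_fun (\<lambda>x. f x * g x)"
  by (rule SA_smooth, rule SA.mult; rule SA.sm; rule assms)

lemma smooth_fun_comp:
  assumes "smooth_real g" "smooth_fun h"
  shows "smooth_fun (\<lambda>x. g (h x))"
  by (rule SA_smooth, rule SA.comp; rule assms)

lemma smooth_fun_cont: "smooth_fun f \<Longrightarrow> continuous_on S f"
  by (intro continuous_at_imp_continuous_on ballI differentiable_imp_continuous_within smooth_fun_diff)

lemma smooth_fun_partial_cont: "smooth_fun f \<Longrightarrow> i \<in> Basis \<Longrightarrow> continuous_on S (\<lambda>x. frechet_derivative f (at x) i)"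
  by (rule smooth_fun_cont[OF smooth_fun_partial])



lemma even_deriv0:
  assumes "smooth_real n" "\<forall>r. n r = n (- r)"
  shows "deriv n 0 = 0"
proof -
  have d: "(n has_real_derivative deriv n 0) (at 0)" using smooth_real_DERIV[OF assms(1)] .
  have "DERIV n (- 0) :> deriv n 0" using d by simp
  then have "DERIV (\<lambda>x. n (- x)) 0 :> - deriv n 0" by (simp only: DERIV_mirror)
  moreover have "(\<lambda>x. n (- x)) = n" using assms(2) by (auto simp: fun_eq_iff)
  ultimately have "DERIV n 0 :> - deriv n 0" by simp
  with d have "deriv n 0 = - deriv n 0" using DERIV_unique by blast
  then show ?thesis by simp
qed

lemma mvt_bound:
  fixes m m' :: "real \<Rightarrow> real"
  assumes d: "\<And>x. (m has_real_derivative m' x) (at x)"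
    and b: "\<And>x. 0 \<le> m' x \<and> m' x \<le> c"
  shows mvt_mono: "a \<le> b \<Longrightarrow> m a \<le> m b"
    and mvt_lip: "\<bar>m a - m b\<bar> \<le> c * \<bar>a - b\<bar>"
proof -
  have key: "a < b \<Longrightarrow> 0 \<le> m b - m a \<and> m b - m a \<le> c * (b - a)" for a b
  proof -
    assume ab: "a < b"
    obtain z where "m b - m a = (b - a) * m' z" using MVT2[OF ab, of m m'] d by blast
    then show ?thesis using b[of z] ab by (simp add: mult_left_mono mult.commute)
  qed
  show "a \<le> b \<Longrightarrow> m a \<le> m b" using key[of a b] by (cases "a = b") auto
  show "\<bar>m a - m b\<bar> \<le> c * \<bar>a - b\<bar>"
  proof (cases a b rule: linorder_cases)
    case less then show ?thesis using key[of a b] by auto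
  next
    case equal then show ?thesis by simp
  next
    case greater then show ?thesis using key[of b a] by auto
  qed
qed

lemma cs_bounded:
  fixes f :: "'a::euclidean_space \<Rightarrow> 'b::real_normed_vector"
  assumes "continuous_on UNIV f" "compact K" "\<And>x. x \<notin> K \<Longrightarrow> f x = 0"
  shows "\<exists>B>0. \<forall>x. norm (f x) \<le> B"
proof -
  have "compact (f ` K)" by (rule compact_continuous_image) (use assms in \<open>auto intro: continuous_on_subset\<close>)
  then obtain b where b: "b > 0" "\<And>y. y \<in> f ` K \<Longrightarrow> norm y \<le> b"
    using compact_imp_bounded bounded_pos by metis
  have "norm (f x) \<le> b" for x using b assms(3)[of x] by (cases "x \<in> K") auto
  with b show ?thesis by blast
qed

lemma cs_integrable:
  fixes f :: "'a::euclidean_space \<Rightarrow> 'b::{banach, second_countable_topology}"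
  assumes "continuous_on UNIV f" "compact K" "\<And>x. x \<notin> K \<Longrightarrow> f x = 0"
  shows "integrable lborel f"
proof -
  have "integrable lborel (\<lambda>x. indicator K x *\<^sub>R f x)"
    by (rule borel_integrable_compact) (use assms in \<open>auto intro: continuous_on_subset\<close>)
  moreover have "(\<lambda>x. indicator K x *\<^sub>R f x) = f" using assms(3) by (auto simp: fun_eq_iff indicator_def)
  ultimately show ?thesis by simp
qed

section \<open>Integration by parts\<close>

lemma partial_zero_outside:
  assumes "smooth_fun F" "compact K" "\<And>x. x \<notin> K \<Longrightarrow> F x = 0" "x \<notin> K"
  shows "frechet_derivative F (at x) = (\<lambda>_. 0)"
proof -
  have Fd: "(F has_derivative frechet_derivative F (at x)) (at x)"
    using smooth_fun_diff[OF assms(1)] frechet_derivative_works by blast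
  have "((\<lambda>_. 0) has_derivative frechet_derivative F (at x)) (at x)"
    by (rule has_derivative_transform_within_open[OF Fd, of "- K"])
       (use assms in \<open>auto intro: compact_imp_closed\<close>)
  then show ?thesis using has_derivative_unique has_derivative_const by blast
qed

lemma line_deriv:
  assumes "smooth_fun F"
  shows "((\<lambda>s. F (x + s *\<^sub>R i)) has_real_derivative frechet_derivative F (at (x + t *\<^sub>R i)) i) (at t)"
proof -
  let ?y = "x + t *\<^sub>R i"
  have Fd: "(F has_derivative frechet_derivative F (at ?y)) (at ?y)"
    using smooth_fun_diff[OF assms(1)] frechet_derivative_works by blast
  have ld: "((\<lambda>s. x + s *\<^sub>R i) has_derivative (\<lambda>s. s *\<^sub>R i)) (at t)"
    by (auto intro!: derivative_eq_intros)
  have "((\<lambda>s. F (x + s *\<^sub>R i)) has_derivative (\<lambda>s. frechet_derivative F (at ?y) (s *\<^sub>R i))) (at t)"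
    using diff_chain_at[OF ld Fd] by (simp add: o_def)
  moreover have "(\<lambda>s. frechet_derivative F (at ?y) (s *\<^sub>R i)) = (*) (frechet_derivative F (at ?y) i)"
    using linear_cmul[OF has_derivative_linear[OF Fd]] by (auto simp: fun_eq_iff)
  ultimately show ?thesis by (simp add: has_field_derivative_def)
qed

lemma ibp_zero:
  fixes F :: "'a::euclidean_space \<Rightarrow> real"
  assumes sm: "smooth_fun F" and K: "compact K" and z: "\<And>x. x \<notin> K \<Longrightarrow> F x = 0" and i: "i \<in> Basis"
  shows "integral\<^sup>L lborel (\<lambda>x. frechet_derivative F (at x) i) = 0"
    and "integrable lborel (\<lambda>x. frechet_derivative F (at x) i)"
proof -
  define dF where "dF x = frechet_derivative F (at x) i" for x
  have cF: "continuous_on UNIV F" by (rule smooth_fun_cont[OF sm])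
  have cdF: "continuous_on UNIV dF" unfolding dF_def by (rule smooth_fun_partial_cont[OF sm i])
  have dF0: "x \<notin> K \<Longrightarrow> dF x = 0" for x unfolding dF_def using partial_zero_outside[OF sm K z] by simp
  obtain B where B: "B > 0" "\<And>x. norm (dF x) \<le> B" using cs_bounded[OF cdF K dF0] by blast
  obtain R where R: "R \<ge> 0" "K \<subseteq> cball 0 R"
    using compact_imp_bounded[OF K] bounded_pos by (metis less_imp_le mem_cball_0 subsetI)
  have Fint: "integrable lborel F" by (rule cs_integrable[OF cF K z])
  show dFint: "integrable lborel (\<lambda>x. frechet_derivative F (at x) i)"
    using cs_integrable[OF cdF K dF0] unfolding dF_def .
  have Fmeas: "F \<in> borel_measurable borel" using cF by (rule borel_measurable_continuous_onI)
  have pm: "(+) c \<in> measurable lborel borel" for c :: 'a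
    using borel_measurable_continuous_onI[of "(+) c"] continuous_on_add[OF continuous_on_const continuous_on_id]
    by simp
  have transl: "integral\<^sup>L lborel (\<lambda>x. F (c + x)) = integral\<^sup>L lborel F" for c :: 'a
  proof -
    have "integral\<^sup>L lborel F = integral\<^sup>L (distr lborel borel ((+) c)) F" by (simp add: lborel_distr_plus)
    also have "\<dots> = integral\<^sup>L lborel (\<lambda>x. F (c + x))" by (rule integral_distr[OF pm Fmeas])
    finally show ?thesis by simp
  qed
  have transl_int: "integrable lborel (\<lambda>x. F (c + x))" for c :: 'a
  proof -
    have "integrable (distr lborel borel ((+) c)) F" using Fint by (simp add: lborel_distr_plus)
    then show ?thesis by (subst (asm) integrable_distr_eq[OF pm Fmeas])
  qed
  define h where "h m = inverse (real (Suc m))" for m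
  have hpos: "h m > 0" "h m \<le> 1" for m unfolding h_def by (auto simp: field_simps)
  define q where "q m x = (F (x + h m *\<^sub>R i) - F x) / h m" for m x
  have qint: "integral\<^sup>L lborel (q m) = 0" for m
  proof -
    have ti: "integrable lborel (\<lambda>x. F (x + h m *\<^sub>R i))"
      using transl_int[of "h m *\<^sub>R i"] by (simp add: add.commute)
    have "integral\<^sup>L lborel (q m) = (integral\<^sup>L lborel (\<lambda>x. F (x + h m *\<^sub>R i)) - integral\<^sup>L lborel F) / h m"
      unfolding q_def by (simp add: Bochner_Integration.integral_diff[OF ti Fint])
    also have "integral\<^sup>L lborel (\<lambda>x. F (x + h m *\<^sub>R i)) = integral\<^sup>L lborel (\<lambda>x. F (h m *\<^sub>R i + x))"
      by (simp add: add.commute)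
    finally have "integral\<^sup>L lborel (q m) = (integral\<^sup>L lborel (\<lambda>x. F (h m *\<^sub>R i + x)) - integral\<^sup>L lborel F) / h m" .
    then show ?thesis by (simp add: transl)
  qed
  have hlim: "filterlim h (at 0) sequentially"
    unfolding filterlim_at using hpos LIMSEQ_inverse_real_of_nat unfolding h_def
    by (auto intro!: always_eventually)
  have qlim: "(\<lambda>m. q m x) \<longlonglongrightarrow> dF x" for x
  proof -
    have "((\<lambda>s. F (x + s *\<^sub>R i)) has_real_derivative dF x) (at 0)"
      using line_deriv[OF sm, of x i 0] unfolding dF_def by simp
    then have "((\<lambda>y. (F (x + y *\<^sub>R i) - F (x + 0 *\<^sub>R i)) / (y - 0)) \<longlongrightarrow> dF x) (at 0)"
      by (simp only: has_field_derivative_iff)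
    from filterlim_compose[OF this hlim] show ?thesis unfolding q_def by simp
  qed
  have qbound: "norm (q m x) \<le> indicator (cball 0 (R + 1)) x *\<^sub>R B" for m x
  proof (cases "x \<in> cball 0 (R + 1)")
    case True
    obtain t where "F (x + h m *\<^sub>R i) - F (x + 0 *\<^sub>R i) = (h m - 0) * dF (x + t *\<^sub>R i)"
      using MVT2[of 0 "h m" "\<lambda>s. F (x + s *\<^sub>R i)" "\<lambda>t. dF (x + t *\<^sub>R i)"] hpos[of m]
        line_deriv[OF sm] unfolding dF_def by blast
    then have "\<bar>q m x\<bar> = \<bar>dF (x + t *\<^sub>R i)\<bar>" unfolding q_def using hpos[of m] by simp
    also have "\<dots> \<le> B" using B(2) by simp
    finally show ?thesis using True by simp
  next
    case False
    then have nx: "norm x > R + 1" by simp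
    have "norm (x + h m *\<^sub>R i) \<ge> norm x - norm (h m *\<^sub>R i)" using norm_triangle_ineq[of "x + h m *\<^sub>R i" "- (h m *\<^sub>R i)"] by simp
    moreover have "norm (h m *\<^sub>R i) \<le> 1" using hpos[of m] i by simp
    ultimately have "norm (x + h m *\<^sub>R i) > R" using nx by simp
    then have "x + h m *\<^sub>R i \<notin> K" "x \<notin> K" using R nx by auto
    then show ?thesis using False unfolding q_def by (simp add: z)
  qed
  have qmeas: "q m \<in> borel_measurable lborel" for m
  proof -
    have "continuous_on UNIV (q m)" unfolding q_def
      by (intro continuous_intros continuous_on_compose2[OF cF]) (auto simp: hpos(1)[THEN less_imp_neq, symmetric])
    then show ?thesis using borel_measurable_continuous_onI by simp
  qed
  have "(\<lambda>m. integral\<^sup>L lborel (q m)) \<longlonglongrightarrow> integral\<^sup>L lborel dF"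
  proof (rule integral_dominated_convergence[where w = "\<lambda>x. indicator (cball 0 (R + 1)) x *\<^sub>R B"])
    show "dF \<in> borel_measurable lborel" using cdF borel_measurable_continuous_onI by simp
    show "integrable lborel (\<lambda>x. indicator (cball 0 (R + 1)) x *\<^sub>R B)"
      by (rule borel_integrable_compact) auto
    show "\<And>m. q m \<in> borel_measurable lborel" by (rule qmeas)
    show "AE x in lborel. (\<lambda>m. q m x) \<longlonglongrightarrow> dF x" using qlim by (intro always_eventually allI)
    show "\<And>m. AE x in lborel. norm (q m x) \<le> indicator (cball 0 (R + 1)) x *\<^sub>R B"
      using qbound by (intro always_eventually allI)
  qed
  then have "(\<lambda>m. 0::real) \<longlonglongrightarrow> integral\<^sup>L lborel dF" using qint by simp
  then have "integral\<^sup>L lborel dF = 0" by (simp add: LIMSEQ_const_iff)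
  then show "integral\<^sup>L lborel (\<lambda>x. frechet_derivative F (at x) i) = 0"
    unfolding dF_def by simp
qed



lemma powr_sum_le:
  fixes x y p :: real
  assumes "0 \<le> x" "0 \<le> y" "0 < p"
  shows "(x + y) powr p \<le> 2 powr p * (x powr p + y powr p)"
proof -
  have "(x + y) powr p \<le> (2 * max x y) powr p"
    by (rule powr_mono2) (use assms in auto)
  also have "\<dots> = 2 powr p * max x y powr p" by (simp add: powr_mult)
  also have "max x y powr p \<le> x powr p + y powr p" by (simp add: max_def)
  then have "2 powr p * max x y powr p \<le> 2 powr p * (x powr p + y powr p)"
    by (rule mult_left_mono) simp
  finally show ?thesis .
qed

lemma norm_lin_powr:
  fixes u v :: "'b::real_normed_vector"
  assumes "0 < p"
  shows "norm (a *\<^sub>R u + b *\<^sub>R v) powr p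
     \<le> 2 powr p * (\<bar>a\<bar> powr p * norm u powr p + \<bar>b\<bar> powr p * norm v powr p)"
proof -
  have "norm (a *\<^sub>R u + b *\<^sub>R v) powr p \<le> (\<bar>a\<bar> * norm u + \<bar>b\<bar> * norm v) powr p"
    by (rule powr_mono2) (use assms norm_triangle_ineq[of "a *\<^sub>R u" "b *\<^sub>R v"] in auto)
  also have "\<dots> \<le> 2 powr p * ((\<bar>a\<bar> * norm u) powr p + (\<bar>b\<bar> * norm v) powr p)"
    by (rule powr_sum_le) (use assms in auto)
  finally show ?thesis by (simp add: powr_mult)
qed

lemma norm_scale_powr:
  fixes u :: "'b::real_normed_vector"
  assumes "0 < p" "\<bar>a\<bar> \<le> c"
  shows "norm (a *\<^sub>R u) powr p \<le> c powr p * norm u powr p"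
proof -
  have "norm (a *\<^sub>R u) powr p = \<bar>a\<bar> powr p * norm u powr p" by (simp add: powr_mult)
  also have "\<dots> \<le> c powr p * norm u powr p"
    by (intro mult_right_mono powr_mono2) (use assms in auto)
  finally show ?thesis .
qed

lemma le_eps_powr:
  fixes y e p :: real
  assumes "0 \<le> y" "0 < e" "1 \<le> p"
  shows "y \<le> e + e powr (1 - p) * y powr p"
proof (cases "y \<le> e")
  case True then show ?thesis using assms by (simp add: add_increasing2)
next
  case False
  then have ye: "y > e" by simp
  have y1: "y powr 1 = y" using ye assms by simp
  have "y powr p = y powr (1 + (p - 1))" by simp
  also have "\<dots> = y powr 1 * y powr (p - 1)" by (rule powr_add)
  also have "\<dots> = y * y powr (p - 1)" by (simp only: y1)
  also have "\<dots> \<ge> y * e powr (p - 1)"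
    by (intro mult_left_mono powr_mono2) (use assms ye in auto)
  finally have "e powr (1 - p) * y powr p \<ge> e powr (1 - p) * (y * e powr (p - 1))"
    by (intro mult_left_mono) auto
  moreover have "e powr (1 - p) * e powr (p - 1) = 1"
    using assms by (simp add: powr_add[symmetric])
  then have "e powr (1 - p) * (y * e powr (p - 1)) = y"
    by (metis mult.left_commute mult.right_neutral)
  ultimately show ?thesis using assms by simp
qed

lemma Lp_meas: "Lp M p f \<Longrightarrow> f \<in> borel_measurable M"
  unfolding Lp_def by simp

lemma Lp_int: "Lp M p f \<Longrightarrow> integrable M (\<lambda>x. norm (f x) powr p)"
  unfolding Lp_def by simp

lemma Lp_lin:
  fixes f g :: "'b \<Rightarrow> 'c::{banach, second_countable_topology}"
  assumes "Lp M p f" "Lp M p g" "0 < p"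
  shows "Lp M p (\<lambda>x. a *\<^sub>R f x + b *\<^sub>R g x)"
  unfolding Lp_def
proof
  have [measurable]: "f \<in> borel_measurable M" "g \<in> borel_measurable M"
    using assms(1,2) unfolding Lp_def by auto
  show m: "(\<lambda>x. a *\<^sub>R f x + b *\<^sub>R g x) \<in> borel_measurable M"
    by measurable
  show "integrable M (\<lambda>x. norm (a *\<^sub>R f x + b *\<^sub>R g x) powr p)"
  proof (rule Bochner_Integration.integrable_bound)
    show "integrable M (\<lambda>x. 2 powr p * (\<bar>a\<bar> powr p * norm (f x) powr p + \<bar>b\<bar> powr p * norm (g x) powr p))"
      using assms(1,2) unfolding Lp_def by (intro integrable_mult_right Bochner_Integration.integrable_add) auto
    show "(\<lambda>x. norm (a *\<^sub>R f x + b *\<^sub>R g x) powr p) \<in> borel_measurable M"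
      by measurable
    show "AE x in M. norm (norm (a *\<^sub>R f x + b *\<^sub>R g x) powr p)
        \<le> norm (2 powr p * (\<bar>a\<bar> powr p * norm (f x) powr p + \<bar>b\<bar> powr p * norm (g x) powr p))"
      using norm_lin_powr[OF assms(3)] by (intro always_eventually allI) simp
  qed
qed

lemma Lp_bound:
  fixes f :: "'b \<Rightarrow> 'c::{banach, second_countable_topology}"
    and g :: "'b \<Rightarrow> 'd::{banach, second_countable_topology}"
  assumes "f \<in> borel_measurable M" "Lp M p g" "0 < p" "\<And>x. norm (f x) \<le> c * norm (g x)" "0 \<le> c"
  shows "Lp M p f"
  unfolding Lp_def
proof
  show "f \<in> borel_measurable M" by fact
  show "integrable M (\<lambda>x. norm (f x) powr p)"
  proof (rule Bochner_Integration.integrable_bound)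
    show "integrable M (\<lambda>x. c powr p * norm (g x) powr p)"
      using assms(2) unfolding Lp_def by auto
    have [measurable]: "f \<in> borel_measurable M" by fact
    show "(\<lambda>x. norm (f x) powr p) \<in> borel_measurable M" by measurable
    have "norm (f x) powr p \<le> c powr p * norm (g x) powr p" for x
    proof -
      have "norm (f x) powr p \<le> (c * norm (g x)) powr p"
        by (rule powr_mono2) (use assms(3,4) in auto)
      also have "\<dots> = c powr p * norm (g x) powr p"
        using assms(5) by (simp add: powr_mult)
      finally show ?thesis .
    qed
    then show "AE x in M. norm (norm (f x) powr p) \<le> norm (c powr p * norm (g x) powr p)"
      by (intro always_eventually allI) simp
  qed
qed

lemma Lp_bounded:
  fixes f :: "'b \<Rightarrow> 'c::{banach, second_countable_topology}"
  assumes "finite_measure M" "f \<in> borel_measurable M" "\<And>x. norm (f x) \<le> B" "0 \<le> p"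
  shows "Lp M p f"
  unfolding Lp_def
proof
  show "f \<in> borel_measurable M" by fact
  show "integrable M (\<lambda>x. norm (f x) powr p)"
  proof (rule finite_measure.integrable_const_bound[OF assms(1), where B = "B powr p"])
    show "AE x in M. norm (norm (f x) powr p) \<le> B powr p"
      using assms(3,4) by (intro always_eventually allI) (simp add: powr_mono2)
    have [measurable]: "f \<in> borel_measurable M" by fact
    show "(\<lambda>x. norm (f x) powr p) \<in> borel_measurable M" by measurable
  qed
qed

lemma Lp_integrable:
  fixes f :: "'b \<Rightarrow> 'c::{banach, second_countable_topology}"
  assumes "finite_measure M" "1 \<le> p" "Lp M p f"
  shows "integrable M f"
proof (rule Bochner_Integration.integrable_bound)
  show "integrable M (\<lambda>x. 1 + norm (f x) powr p)"
    using assms Lp_int finite_measure.integrable_const by (intro Bochner_Integration.integrable_add) blast+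
  show "f \<in> borel_measurable M" using assms(3) by (rule Lp_meas)
  have "norm (f x) \<le> 1 + norm (f x) powr p" for x
  proof (cases "norm (f x) \<le> 1")
    case True then show ?thesis by (simp add: add_increasing2)
  next
    case False
    then have "norm (f x) powr 1 \<le> norm (f x) powr p" using assms(2) by (intro powr_mono) auto
    then show ?thesis using False by simp
  qed
  then show "AE x in M. norm (f x) \<le> norm (1 + norm (f x) powr p)"
    by (intro always_eventually allI) simp
qed

lemma L1_of_Lp:
  fixes a :: "nat \<Rightarrow> 'b \<Rightarrow> 'c::{banach, second_countable_topology}"
  assumes M: "finite_measure M" and p: "1 \<le> p" and L: "\<And>k. Lp M p (a k)"
    and lim: "(\<lambda>k. \<integral>x. norm (a k x) powr p \<partial>M) \<longlonglongrightarrow> 0"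
  shows "(\<lambda>k. \<integral>x. norm (a k x) \<partial>M) \<longlonglongrightarrow> 0"
proof (rule LIMSEQ_I)
  fix r :: real assume r: "0 < r"
  define \<mu> where "\<mu> = measure M (space M)"
  have \<mu>: "\<mu> \<ge> 0" unfolding \<mu>_def by simp
  define e where "e = r / (2 * (\<mu> + 1))"
  have e: "e > 0" using r \<mu> unfolding e_def by simp
  have e\<mu>: "e * \<mu> < r / 2" using r \<mu> unfolding e_def by (simp add: field_simps)
  have ep: "e powr (1 - p) > 0" using e by simp
  obtain N where N: "\<And>k. k \<ge> N \<Longrightarrow> norm ((\<integral>x. norm (a k x) powr p \<partial>M) - 0) < (r / 2) / e powr (1 - p)"
    using LIMSEQ_D[OF lim, of "(r / 2) / e powr (1 - p)"] r ep by auto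
  show "\<exists>no. \<forall>k\<ge>no. norm ((\<integral>x. norm (a k x) \<partial>M) - 0) < r"
  proof (intro exI allI impI)
    fix k assume k: "k \<ge> N"
    have ik: "integrable M (\<lambda>x. norm (a k x) powr p)" using L Lp_int by blast
    have "(\<integral>x. norm (a k x) \<partial>M) \<le> (\<integral>x. e + e powr (1 - p) * norm (a k x) powr p \<partial>M)"
    proof (rule integral_mono)
      show "integrable M (\<lambda>x. norm (a k x))"
        using Lp_integrable[OF M p L] by simp
      show "integrable M (\<lambda>x. e + e powr (1 - p) * norm (a k x) powr p)"
        using ik finite_measure.integrable_const[OF M] by (intro Bochner_Integration.integrable_add) auto
      show "norm (a k x) \<le> e + e powr (1 - p) * norm (a k x) powr p" for x
        by (rule le_eps_powr) (use e p in auto)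
    qed
    also have "\<dots> = e * \<mu> + e powr (1 - p) * (\<integral>x. norm (a k x) powr p \<partial>M)"
    proof -
      have i1: "integrable M (\<lambda>x. e)" using finite_measure.integrable_const[OF M] .
      have i2: "integrable M (\<lambda>x. e powr (1 - p) * norm (a k x) powr p)" using ik by simp
      show ?thesis
        by (simp add: Bochner_Integration.integral_add[OF i1 i2] \<mu>_def mult.commute)
    qed
    also have "e powr (1 - p) * (\<integral>x. norm (a k x) powr p \<partial>M) < r / 2"
    proof -
      have "(\<integral>x. norm (a k x) powr p \<partial>M) < (r / 2) / e powr (1 - p)" using N[OF k] by simp
      then show ?thesis using ep by (simp add: field_simps)
    qed
    finally show "norm ((\<integral>x. norm (a k x) \<partial>M) - 0) < r" using e\<mu> by simp
  qed
qed



section \<open>Test functions and gradients\<close>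

lemma grad_inner: "i \<in> Basis \<Longrightarrow> grad \<phi> x \<bullet> i = frechet_derivative \<phi> (at x) i"
  unfolding grad_def inner_sum_left
proof -
  assume i: "i \<in> Basis"
  have "(\<Sum>b\<in>Basis. (frechet_derivative \<phi> (at x) b *\<^sub>R b) \<bullet> i) = (\<Sum>b\<in>Basis. (b \<bullet> i) * frechet_derivative \<phi> (at x) b)"
    by (simp add: mult.commute)
  also have "\<dots> = frechet_derivative \<phi> (at x) i" using i by (simp add: inner_commute)
  finally show "(\<Sum>b\<in>Basis. (frechet_derivative \<phi> (at x) b *\<^sub>R b) \<bullet> i) = frechet_derivative \<phi> (at x) i" .
qed

lemma grad_cont: "smooth_fun \<phi> \<Longrightarrow> continuous_on UNIV (grad \<phi>)"
  unfolding grad_def[abs_def]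
  by (intro continuous_on_sum continuous_on_scaleR continuous_on_const smooth_fun_partial_cont) auto

lemma grad_zero_outside:
  assumes "smooth_fun F" "compact K" "\<And>x. x \<notin> K \<Longrightarrow> F x = 0" "x \<notin> K"
  shows "grad F x = 0"
  unfolding grad_def using partial_zero_outside[OF assms] by simp

lemma grad_lin:
  assumes "smooth_fun f" "smooth_fun g"
  shows "grad (\<lambda>x. a * f x + b * g x) x = a *\<^sub>R grad f x + b *\<^sub>R grad g x"
proof -
  have fd: "(f has_derivative frechet_derivative f (at x)) (at x)"
    using smooth_fun_diff[OF assms(1)] frechet_derivative_works by blast
  have gd: "(g has_derivative frechet_derivative g (at x)) (at x)"
    using smooth_fun_diff[OF assms(2)] frechet_derivative_works by blast
  have "((\<lambda>x. a * f x + b * g x) has_derivative (\<lambda>v. a * frechet_derivative f (at x) v + b * frechet_derivative g (at x) v)) (at x)"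
    by (intro derivative_intros fd gd)
  then have e: "frechet_derivative (\<lambda>x. a * f x + b * g x) (at x) = (\<lambda>v. a * frechet_derivative f (at x) v + b * frechet_derivative g (at x) v)"
    by (simp only: frechet_derivative_at[symmetric])
  show ?thesis unfolding grad_def e
    by (simp add: scaleR_add_left sum.distrib scaleR_sum_right)
qed

lemma grad_comp:
  assumes "smooth_real g" "smooth_fun f"
  shows "grad (\<lambda>x. g (f x)) x = deriv g (f x) *\<^sub>R grad f x"
proof -
  have hd: "(f has_derivative frechet_derivative f (at x)) (at x)"
    using smooth_fun_diff[OF assms(2)] frechet_derivative_works by blast
  have gd: "(g has_derivative (\<lambda>t. t * deriv g (f x))) (at (f x))"
  proof -
    have "(\<lambda>t. t * deriv g (f x)) = (*) (deriv g (f x))" by (auto simp: fun_eq_iff)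
    then show ?thesis using smooth_real_DERIV[OF assms(1)] by (simp add: has_field_derivative_def)
  qed
  have cd: "((\<lambda>x. g (f x)) has_derivative (\<lambda>v. frechet_derivative f (at x) v * deriv g (f x))) (at x)"
    using diff_chain_at[OF hd gd] by (simp add: o_def)
  then have e: "frechet_derivative (\<lambda>x. g (f x)) (at x) = (\<lambda>v. frechet_derivative f (at x) v * deriv g (f x))"
    by (simp only: frechet_derivative_at[symmetric])
  show ?thesis unfolding grad_def e
    by (simp add: scaleR_sum_right mult.commute)
qed

lemma test_funD:
  assumes "test_fun D \<phi>"
  obtains K where "smooth_fun \<phi>" "compact K" "K \<subseteq> D" "\<And>x. x \<notin> K \<Longrightarrow> \<phi> x = 0"
  using assms unfolding test_fun_def by blast

lemma D_props:
  assumes "open D" "bounded D"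
  shows "D \<in> sets lebesgue" "finite_measure (lebesgue_on D)"
  using lmeasurable_open[OF assms(2,1)] by (auto intro: finite_measure_lebesgue_on)

lemma cont_meas_D:
  "continuous_on UNIV f \<Longrightarrow> D \<in> sets lebesgue \<Longrightarrow> f \<in> borel_measurable (lebesgue_on D)"
  by (rule continuous_imp_measurable_on_sets_lebesgue) (auto intro: continuous_on_subset)

lemma tf_facts:
  assumes "test_fun D \<phi>" "open D" "bounded D" "0 \<le> p"
  shows "Lp (lebesgue_on D) p \<phi>" "Lp (lebesgue_on D) p (grad \<phi>)"
    "\<phi> \<in> borel_measurable (lebesgue_on D)" "grad \<phi> \<in> borel_measurable (lebesgue_on D)"
    "\<exists>B. \<forall>x. \<bar>\<phi> x\<bar> \<le> B" "\<And>i. i \<in> Basis \<Longrightarrow> \<exists>B. \<forall>x. \<bar>frechet_derivative \<phi> (at x) i\<bar> \<le> B"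
    "\<And>i. i \<in> Basis \<Longrightarrow> (\<lambda>x. frechet_derivative \<phi> (at x) i) \<in> borel_measurable (lebesgue_on D)"
proof -
  obtain K where K: "smooth_fun \<phi>" "compact K" "K \<subseteq> D" "\<And>x. x \<notin> K \<Longrightarrow> \<phi> x = 0"
    using test_funD[OF assms(1)] by blast
  note DP = D_props[OF assms(2,3)]
  have c1: "continuous_on UNIV \<phi>" using smooth_fun_cont[OF K(1)] .
  have c2: "continuous_on UNIV (grad \<phi>)" using grad_cont[OF K(1)] .
  obtain B1 where B1: "\<And>x. norm (\<phi> x) \<le> B1" using cs_bounded[OF c1 K(2,4)] by blast
  obtain B2 where B2: "\<And>x. norm (grad \<phi> x) \<le> B2"
    using cs_bounded[OF c2 K(2) grad_zero_outside[OF K(1,2,4)]] by blast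
  show m1: "\<phi> \<in> borel_measurable (lebesgue_on D)" by (rule cont_meas_D[OF c1 DP(1)])
  show m2: "grad \<phi> \<in> borel_measurable (lebesgue_on D)" by (rule cont_meas_D[OF c2 DP(1)])
  show "Lp (lebesgue_on D) p \<phi>" by (rule Lp_bounded[OF DP(2) m1 B1 assms(4)])
  show "Lp (lebesgue_on D) p (grad \<phi>)" by (rule Lp_bounded[OF DP(2) m2 B2 assms(4)])
  show "\<exists>B. \<forall>x. \<bar>\<phi> x\<bar> \<le> B" using B1 by auto
  fix i :: 'a assume i: "i \<in> Basis"
  have c3: "continuous_on UNIV (\<lambda>x. frechet_derivative \<phi> (at x) i)" by (rule smooth_fun_partial_cont[OF K(1) i])
  show "\<exists>B. \<forall>x. \<bar>frechet_derivative \<phi> (at x) i\<bar> \<le> B"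
    using cs_bounded[OF c3 K(2)] partial_zero_outside[OF K(1,2,4)] by fastforce
  show "(\<lambda>x. frechet_derivative \<phi> (at x) i) \<in> borel_measurable (lebesgue_on D)"
    by (rule cont_meas_D[OF c3 DP(1)])
qed



lemma lebesgue_on_eq_lborel:
  fixes g :: "'a::euclidean_space \<Rightarrow> real"
  assumes D: "D \<in> sets lebesgue" and g: "g \<in> borel_measurable borel" and z: "\<And>x. x \<notin> D \<Longrightarrow> g x = 0"
  shows "integral\<^sup>L (lebesgue_on D) g = integral\<^sup>L lborel g"
proof -
  have "integral\<^sup>L (lebesgue_on D) g = integral\<^sup>L lebesgue (\<lambda>x. indicator D x *\<^sub>R g x)"
    by (rule integral_restrict_space) (use D in simp)
  also have "(\<lambda>x. indicator D x *\<^sub>R g x) = g" using z by (auto simp: fun_eq_iff indicator_def)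
  also have "integral\<^sup>L lebesgue g = integral\<^sup>L lborel g"
    by (rule integral_completion) (use g in simp)
  finally show ?thesis .
qed

lemma ibp_D:
  assumes D: "D \<in> sets lebesgue" and w: "smooth_fun w" and \<psi>: "test_fun D \<psi>" and i: "i \<in> Basis"
  shows "(\<integral>x. w x * frechet_derivative \<psi> (at x) i \<partial>lebesgue_on D)
       = - (\<integral>x. frechet_derivative w (at x) i * \<psi> x \<partial>lebesgue_on D)"
proof -
  obtain K where K: "smooth_fun \<psi>" "compact K" "K \<subseteq> D" "\<And>x. x \<notin> K \<Longrightarrow> \<psi> x = 0"
    using test_funD[OF \<psi>] by blast
  define F where "F x = w x * \<psi> x" for x
  have sF: "smooth_fun F" unfolding F_def[abs_def] by (rule smooth_fun_mult[OF w K(1)])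
  have zF: "x \<notin> K \<Longrightarrow> F x = 0" for x unfolding F_def using K(4) by simp
  define a where "a x = w x * frechet_derivative \<psi> (at x) i" for x
  define b where "b x = frechet_derivative w (at x) i * \<psi> x" for x
  have dF: "frechet_derivative F (at x) i = a x + b x" for x
  proof -
    have fd: "(w has_derivative frechet_derivative w (at x)) (at x)"
      using smooth_fun_diff[OF w] frechet_derivative_works by blast
    have gd: "(\<psi> has_derivative frechet_derivative \<psi> (at x)) (at x)"
      using smooth_fun_diff[OF K(1)] frechet_derivative_works by blast
    have "(F has_derivative (\<lambda>v. w x * frechet_derivative \<psi> (at x) v + frechet_derivative w (at x) v * \<psi> x)) (at x)"
      unfolding F_def[abs_def] using has_derivative_mult[OF fd gd] .
    then have "frechet_derivative F (at x) = (\<lambda>v. w x * frechet_derivative \<psi> (at x) v + frechet_derivative w (at x) v * \<psi> x)"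
      by (simp only: frechet_derivative_at[symmetric])
    then show ?thesis unfolding a_def b_def by simp
  qed
  have ca: "continuous_on UNIV a" unfolding a_def[abs_def]
    by (intro continuous_on_mult smooth_fun_cont[OF w] smooth_fun_partial_cont[OF K(1) i])
  have cb: "continuous_on UNIV b" unfolding b_def[abs_def]
    by (intro continuous_on_mult smooth_fun_cont[OF K(1)] smooth_fun_partial_cont[OF w i])
  have za: "x \<notin> K \<Longrightarrow> a x = 0" for x unfolding a_def using partial_zero_outside[OF K(1,2,4)] by simp
  have zb: "x \<notin> K \<Longrightarrow> b x = 0" for x unfolding b_def using K(4) by simp
  have ia: "integrable lborel a" by (rule cs_integrable[OF ca K(2) za])
  have ib: "integrable lborel b" by (rule cs_integrable[OF cb K(2) zb])
  have "integral\<^sup>L lborel (\<lambda>x. frechet_derivative F (at x) i) = 0" by (rule ibp_zero(1)[OF sF K(2) zF i])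
  then have "integral\<^sup>L lborel (\<lambda>x. a x + b x) = 0" by (simp add: dF)
  then have sum0: "integral\<^sup>L lborel a + integral\<^sup>L lborel b = 0"
    by (simp add: Bochner_Integration.integral_add[OF ia ib])
  have "integral\<^sup>L (lebesgue_on D) a = integral\<^sup>L lborel a"
    by (rule lebesgue_on_eq_lborel[OF D]) (use ca borel_measurable_continuous_onI za K(3) in auto)
  moreover have "integral\<^sup>L (lebesgue_on D) b = integral\<^sup>L lborel b"
    by (rule lebesgue_on_eq_lborel[OF D]) (use cb borel_measurable_continuous_onI zb K(3) in auto)
  ultimately show ?thesis using sum0 unfolding a_def b_def by simp
qed

lemma int_mult_bounded:
  fixes f :: "'b \<Rightarrow> real"
  assumes M: "finite_measure M" and p: "1 \<le> p" and f: "Lp M p f"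
    and b: "b \<in> borel_measurable M" and B: "\<And>x. \<bar>b x\<bar> \<le> B"
  shows "integrable M (\<lambda>x. f x * b x)"
proof (rule Bochner_Integration.integrable_bound)
  show "integrable M (\<lambda>x. B * f x)" using Lp_integrable[OF M p f] by simp
  have [measurable]: "f \<in> borel_measurable M" "b \<in> borel_measurable M" using f b by (auto simp: Lp_def)
  show "(\<lambda>x. f x * b x) \<in> borel_measurable M" by measurable
  have "B \<ge> 0" using B[of undefined] by linarith
  have "\<bar>f x\<bar> * \<bar>b x\<bar> \<le> \<bar>B\<bar> * \<bar>f x\<bar>" for x
    using mult_left_mono[OF B[of x] abs_ge_zero[of "f x"]] \<open>B \<ge> 0\<close> by (simp add: mult.commute)
  then show "AE x in M. norm (f x * b x) \<le> norm (B * f x)"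
    by (intro always_eventually allI) (simp add: abs_mult)
qed

lemma conv_mult:
  fixes u :: "nat \<Rightarrow> 'b \<Rightarrow> real"
  assumes M: "finite_measure M" and p: "1 \<le> p" and u: "\<And>k. Lp M p (u k)" and u0: "Lp M p u0"
    and lim: "(\<lambda>k. \<integral>x. \<bar>u k x - u0 x\<bar> powr p \<partial>M) \<longlonglongrightarrow> 0"
    and b: "b \<in> borel_measurable M" and B: "\<And>x. \<bar>b x\<bar> \<le> B"
  shows "(\<lambda>k. \<integral>x. u k x * b x \<partial>M) \<longlonglongrightarrow> (\<integral>x. u0 x * b x \<partial>M)"
proof -
  have p0: "0 < p" using p by simp
  have B0: "B \<ge> 0" using B[of undefined] by linarith
  define d where "d k x = u k x - u0 x" for k x
  have dL: "Lp M p (d k)" for k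
    using Lp_lin[OF u[of k] u0 p0, of 1 "-1"] unfolding d_def by simp
  have l1: "(\<lambda>k. \<integral>x. norm (d k x) \<partial>M) \<longlonglongrightarrow> 0"
    by (rule L1_of_Lp[OF M p dL]) (use lim in \<open>simp add: d_def\<close>)
  have "(\<lambda>k. (\<integral>x. u k x * b x \<partial>M) - (\<integral>x. u0 x * b x \<partial>M)) \<longlonglongrightarrow> 0"
  proof (rule Lim_null_comparison)
    show "(\<lambda>k. B * (\<integral>x. norm (d k x) \<partial>M)) \<longlonglongrightarrow> 0"
      using tendsto_mult_right_zero[OF l1] by simp
    show "\<forall>\<^sub>F k in sequentially. norm ((\<integral>x. u k x * b x \<partial>M) - (\<integral>x. u0 x * b x \<partial>M)) \<le> B * (\<integral>x. norm (d k x) \<partial>M)"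
    proof (intro always_eventually allI)
      fix k
      have i1: "integrable M (\<lambda>x. u k x * b x)" by (rule int_mult_bounded[OF M p u b B])
      have i2: "integrable M (\<lambda>x. u0 x * b x)" by (rule int_mult_bounded[OF M p u0 b B])
      have i3: "integrable M (\<lambda>x. norm (d k x))" using Lp_integrable[OF M p dL] by simp
      have "(\<integral>x. u k x * b x \<partial>M) - (\<integral>x. u0 x * b x \<partial>M) = (\<integral>x. d k x * b x \<partial>M)"
        unfolding d_def using i1 i2 by (simp add: left_diff_distrib)
      also have "norm \<dots> \<le> (\<integral>x. norm (d k x * b x) \<partial>M)" by (rule integral_norm_bound)
      also have "\<dots> \<le> (\<integral>x. B * norm (d k x) \<partial>M)"
      proof (rule integral_mono)
        show "integrable M (\<lambda>x. norm (d k x * b x))"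
          using int_mult_bounded[OF M p dL b B] by simp
        show "integrable M (\<lambda>x. B * norm (d k x))" using i3 by simp
        show "norm (d k x * b x) \<le> B * norm (d k x)" for x
          using mult_right_mono[OF B[of x] abs_ge_zero[of "d k x"]] by (simp add: abs_mult mult.commute)
      qed
      also have "\<dots> = B * (\<integral>x. norm (d k x) \<partial>M)" by simp
      finally show "norm ((\<integral>x. u k x * b x \<partial>M) - (\<integral>x. u0 x * b x \<partial>M)) \<le> B * (\<integral>x. norm (d k x) \<partial>M)" .
    qed
  qed
  then show ?thesis by (simp add: LIM_zero_iff)
qed

lemma sum_parts_to0:
  fixes X Y :: "nat \<Rightarrow> real"
  assumes "(\<lambda>k. X k + Y k) \<longlonglongrightarrow> 0" "\<And>k. 0 \<le> X k" "\<And>k. 0 \<le> Y k"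
  shows "X \<longlonglongrightarrow> 0" "Y \<longlonglongrightarrow> 0"
  by (rule real_tendsto_sandwich[OF _ _ tendsto_const assms(1)]; use assms in \<open>auto intro: always_eventually\<close>)+



lemma Lp_diff:
  fixes f g :: "'b \<Rightarrow> 'c::{banach, second_countable_topology}"
  assumes "Lp M p f" "Lp M p g" "0 < p"
  shows "Lp M p (\<lambda>x. f x - g x)"
  using Lp_lin[OF assms, of 1 "-1"] by simp

lemma lin_conv:
  fixes u v :: "nat \<Rightarrow> 'b \<Rightarrow> 'c::{banach, second_countable_topology}"
  assumes u: "\<And>k. Lp M p (u k)" and v: "\<And>k. Lp M p (v k)" and p: "0 < p"
    and lu: "(\<lambda>k. \<integral>x. norm (u k x) powr p \<partial>M) \<longlonglongrightarrow> 0"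
    and lv: "(\<lambda>k. \<integral>x. norm (v k x) powr p \<partial>M) \<longlonglongrightarrow> 0"
  shows "(\<lambda>k. \<integral>x. norm (a *\<^sub>R u k x + b *\<^sub>R v k x) powr p \<partial>M) \<longlonglongrightarrow> 0"
proof (rule real_tendsto_sandwich)
  show "(\<lambda>k. 0) \<longlonglongrightarrow> (0::real)" by simp
  have "(\<lambda>k. 2 powr p * (\<bar>a\<bar> powr p * (\<integral>x. norm (u k x) powr p \<partial>M) + \<bar>b\<bar> powr p * (\<integral>x. norm (v k x) powr p \<partial>M))) \<longlonglongrightarrow> 2 powr p * (\<bar>a\<bar> powr p * 0 + \<bar>b\<bar> powr p * 0)"
    by (intro tendsto_intros lu lv)
  then show "(\<lambda>k. 2 powr p * (\<bar>a\<bar> powr p * (\<integral>x. norm (u k x) powr p \<partial>M) + \<bar>b\<bar> powr p * (\<integral>x. norm (v k x) powr p \<partial>M))) \<longlonglongrightarrow> 0"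
    by simp
  show "\<forall>\<^sub>F k in sequentially. 0 \<le> (\<integral>x. norm (a *\<^sub>R u k x + b *\<^sub>R v k x) powr p \<partial>M)"
    by (intro always_eventually allI integral_nonneg_AE) auto
  show "\<forall>\<^sub>F k in sequentially. (\<integral>x. norm (a *\<^sub>R u k x + b *\<^sub>R v k x) powr p \<partial>M)
     \<le> 2 powr p * (\<bar>a\<bar> powr p * (\<integral>x. norm (u k x) powr p \<partial>M) + \<bar>b\<bar> powr p * (\<integral>x. norm (v k x) powr p \<partial>M))"
  proof (intro always_eventually allI)
    fix k
    have iu: "integrable M (\<lambda>x. norm (u k x) powr p)" using Lp_int[OF u] .
    have iv: "integrable M (\<lambda>x. norm (v k x) powr p)" using Lp_int[OF v] .
    have "(\<integral>x. norm (a *\<^sub>R u k x + b *\<^sub>R v k x) powr p \<partial>M)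
        \<le> (\<integral>x. 2 powr p * (\<bar>a\<bar> powr p * norm (u k x) powr p + \<bar>b\<bar> powr p * norm (v k x) powr p) \<partial>M)"
    proof (rule integral_mono)
      show "integrable M (\<lambda>x. norm (a *\<^sub>R u k x + b *\<^sub>R v k x) powr p)"
        using Lp_int[OF Lp_lin[OF u v p]] .
      show "integrable M (\<lambda>x. 2 powr p * (\<bar>a\<bar> powr p * norm (u k x) powr p + \<bar>b\<bar> powr p * norm (v k x) powr p))"
        using iu iv by (intro integrable_mult_right Bochner_Integration.integrable_add) auto
      show "norm (a *\<^sub>R u k x + b *\<^sub>R v k x) powr p
         \<le> 2 powr p * (\<bar>a\<bar> powr p * norm (u k x) powr p + \<bar>b\<bar> powr p * norm (v k x) powr p)" for x
        by (rule norm_lin_powr[OF p])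
    qed
    also have "\<dots> = 2 powr p * (\<bar>a\<bar> powr p * (\<integral>x. norm (u k x) powr p \<partial>M) + \<bar>b\<bar> powr p * (\<integral>x. norm (v k x) powr p \<partial>M))"
      using iu iv by (simp add: Bochner_Integration.integral_add)
    finally show "(\<integral>x. norm (a *\<^sub>R u k x + b *\<^sub>R v k x) powr p \<partial>M)
     \<le> 2 powr p * (\<bar>a\<bar> powr p * (\<integral>x. norm (u k x) powr p \<partial>M) + \<bar>b\<bar> powr p * (\<integral>x. norm (v k x) powr p \<partial>M))" .
  qed
qed

lemma W0_parts:
  assumes "W0 D p f F"
  obtains \<phi> where "Lp (lebesgue_on D) p f" "Lp (lebesgue_on D) p F" "weak_grad D f F"
    "\<And>k. test_fun D (\<phi> k)"
    "(\<lambda>k. \<integral>x. \<bar>\<phi> k x - f x\<bar> powr p \<partial>lebesgue_on D) \<longlonglongrightarrow> 0"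
    "(\<lambda>k. \<integral>x. norm (grad (\<phi> k) x - F x) powr p \<partial>lebesgue_on D) \<longlonglongrightarrow> 0"
proof -
  obtain \<phi> where *: "Lp (lebesgue_on D) p f" "Lp (lebesgue_on D) p F" "weak_grad D f F"
    "\<And>k. test_fun D (\<phi> k)"
    "(\<lambda>k. (\<integral>x. \<bar>\<phi> k x - f x\<bar> powr p \<partial>lebesgue_on D)
            + (\<integral>x. norm (grad (\<phi> k) x - F x) powr p \<partial>lebesgue_on D)) \<longlonglongrightarrow> 0"
    using assms unfolding W0_def by blast
  have "(\<lambda>k. \<integral>x. \<bar>\<phi> k x - f x\<bar> powr p \<partial>lebesgue_on D) \<longlonglongrightarrow> 0"
       "(\<lambda>k. \<integral>x. norm (grad (\<phi> k) x - F x) powr p \<partial>lebesgue_on D) \<longlonglongrightarrow> 0"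
    by (rule sum_parts_to0[OF *(5)]; intro integral_nonneg_AE; simp)+
  with * that show ?thesis by blast
qed

lemma inner_Lp:
  fixes F :: "'b \<Rightarrow> 'a::euclidean_space"
  assumes "Lp M p F" "i \<in> Basis" "0 < p"
  shows "Lp M p (\<lambda>x. F x \<bullet> i)"
proof (rule Lp_bound[OF _ assms(1,3), of _ 1])
  have [measurable]: "F \<in> borel_measurable M" using assms(1) by (rule Lp_meas)
  show "(\<lambda>x. F x \<bullet> i) \<in> borel_measurable M" by measurable
  show "norm (F x \<bullet> i) \<le> 1 * norm (F x)" for x using Basis_le_norm[OF assms(2)] by simp
qed simp

lemma W0_lin:
  fixes D :: "'a::euclidean_space set"
  assumes D: "open D" "bounded D" and p: "1 \<le> p"
    and f: "W0 D p f F" and g: "W0 D p g G"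
  shows "W0 D p (\<lambda>x. a * f x + b * g x) (\<lambda>x. a *\<^sub>R F x + b *\<^sub>R G x)"
proof -
  note DP = D_props[OF D]
  let ?M = "lebesgue_on D"
  have p0: "0 < p" "0 \<le> p" using p by auto
  obtain \<phi> where Lf: "Lp ?M p f" and LF: "Lp ?M p F" and wf: "weak_grad D f F"
    and \<phi>: "\<And>k. test_fun D (\<phi> k)"
    and c1: "(\<lambda>k. \<integral>x. \<bar>\<phi> k x - f x\<bar> powr p \<partial>?M) \<longlonglongrightarrow> 0"
    and c2: "(\<lambda>k. \<integral>x. norm (grad (\<phi> k) x - F x) powr p \<partial>?M) \<longlonglongrightarrow> 0"
    using W0_parts[OF f] by blast
  obtain \<psi> where Lg: "Lp ?M p g" and LG: "Lp ?M p G" and wg: "weak_grad D g G"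
    and \<psi>: "\<And>k. test_fun D (\<psi> k)"
    and d1: "(\<lambda>k. \<integral>x. \<bar>\<psi> k x - g x\<bar> powr p \<partial>?M) \<longlonglongrightarrow> 0"
    and d2: "(\<lambda>k. \<integral>x. norm (grad (\<psi> k) x - G x) powr p \<partial>?M) \<longlonglongrightarrow> 0"
    using W0_parts[OF g] by blast
  have L1: "Lp ?M p (\<lambda>x. a * f x + b * g x)" using Lp_lin[OF Lf Lg p0(1), of a b] by simp
  have L2: "Lp ?M p (\<lambda>x. a *\<^sub>R F x + b *\<^sub>R G x)" using Lp_lin[OF LF LG p0(1)] .
  have wlin: "weak_grad D (\<lambda>x. a * f x + b * g x) (\<lambda>x. a *\<^sub>R F x + b *\<^sub>R G x)"
    unfolding weak_grad_def
  proof (intro allI impI ballI)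
    fix \<theta> :: "'a \<Rightarrow> real" and i :: 'a assume \<theta>: "test_fun D \<theta>" and i: "i \<in> Basis"
    obtain B1 where B1: "\<And>x. \<bar>frechet_derivative \<theta> (at x) i\<bar> \<le> B1" using tf_facts(6)[OF \<theta> D p0(2) i] by blast
    obtain B2 where B2: "\<And>x. \<bar>\<theta> x\<bar> \<le> B2" using tf_facts(5)[OF \<theta> D p0(2)] by blast
    have m1: "(\<lambda>x. frechet_derivative \<theta> (at x) i) \<in> borel_measurable ?M" using tf_facts(7)[OF \<theta> D p0(2) i] .
    have m2: "\<theta> \<in> borel_measurable ?M" using tf_facts(3)[OF \<theta> D p0(2)] .
    have If: "integrable ?M (\<lambda>x. f x * frechet_derivative \<theta> (at x) i)" by (rule int_mult_bounded[OF DP(2) p Lf m1 B1])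
    have Ig: "integrable ?M (\<lambda>x. g x * frechet_derivative \<theta> (at x) i)" by (rule int_mult_bounded[OF DP(2) p Lg m1 B1])
    have IF: "integrable ?M (\<lambda>x. (F x \<bullet> i) * \<theta> x)" by (rule int_mult_bounded[OF DP(2) p inner_Lp[OF LF i p0(1)] m2 B2])
    have IG: "integrable ?M (\<lambda>x. (G x \<bullet> i) * \<theta> x)" by (rule int_mult_bounded[OF DP(2) p inner_Lp[OF LG i p0(1)] m2 B2])
    have "(\<integral>x. (a * f x + b * g x) * frechet_derivative \<theta> (at x) i \<partial>?M)
        = (\<integral>x. a * (f x * frechet_derivative \<theta> (at x) i) + b * (g x * frechet_derivative \<theta> (at x) i) \<partial>?M)"
      by (simp add: algebra_simps)
    also have "\<dots> = a * (\<integral>x. f x * frechet_derivative \<theta> (at x) i \<partial>?M) + b * (\<integral>x. g x * frechet_derivative \<theta> (at x) i \<partial>?M)"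
      using If Ig by simp
    also have "\<dots> = a * (- (\<integral>x. (F x \<bullet> i) * \<theta> x \<partial>?M)) + b * (- (\<integral>x. (G x \<bullet> i) * \<theta> x \<partial>?M))"
      using wf wg \<theta> i unfolding weak_grad_def by simp
    also have "\<dots> = - (\<integral>x. a * ((F x \<bullet> i) * \<theta> x) + b * ((G x \<bullet> i) * \<theta> x) \<partial>?M)"
      using IF IG by simp
    also have "\<dots> = - (\<integral>x. ((a *\<^sub>R F x + b *\<^sub>R G x) \<bullet> i) * \<theta> x \<partial>?M)"
      by (simp add: algebra_simps inner_add_left)
    finally show "(\<integral>x. (a * f x + b * g x) * frechet_derivative \<theta> (at x) i \<partial>?M)
        = - (\<integral>x. ((a *\<^sub>R F x + b *\<^sub>R G x) \<bullet> i) * \<theta> x \<partial>?M)" .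
  qed
  define \<theta> where "\<theta> k x = a * \<phi> k x + b * \<psi> k x" for k x
  have t\<theta>: "test_fun D (\<theta> k)" for k
  proof -
    obtain K1 where K1: "smooth_fun (\<phi> k)" "compact K1" "K1 \<subseteq> D" "\<And>x. x \<notin> K1 \<Longrightarrow> \<phi> k x = 0"
      using test_funD[OF \<phi>] by blast
    obtain K2 where K2: "smooth_fun (\<psi> k)" "compact K2" "K2 \<subseteq> D" "\<And>x. x \<notin> K2 \<Longrightarrow> \<psi> k x = 0"
      using test_funD[OF \<psi>] by blast
    show ?thesis unfolding test_fun_def \<theta>_def[abs_def]
      by (intro conjI smooth_fun_lin K1(1) K2(1) exI[of _ "K1 \<union> K2"]) (use K1 K2 in auto)
  qed
  have Lph: "Lp ?M p (\<phi> k)" "Lp ?M p (\<psi> k)" "Lp ?M p (grad (\<phi> k))" "Lp ?M p (grad (\<psi> k))" for k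
    using tf_facts(1,2)[OF \<phi> D p0(2)] tf_facts(1,2)[OF \<psi> D p0(2)] by auto
  have e1: "(\<lambda>k. \<integral>x. norm (a *\<^sub>R (\<phi> k x - f x) + b *\<^sub>R (\<psi> k x - g x)) powr p \<partial>?M) \<longlonglongrightarrow> 0"
    by (rule lin_conv[OF Lp_diff[OF Lph(1) Lf p0(1)] Lp_diff[OF Lph(2) Lg p0(1)] p0(1)]) (use c1 d1 in simp_all)
  have e2: "(\<lambda>k. \<integral>x. norm (a *\<^sub>R (grad (\<phi> k) x - F x) + b *\<^sub>R (grad (\<psi> k) x - G x)) powr p \<partial>?M) \<longlonglongrightarrow> 0"
    by (rule lin_conv[OF Lp_diff[OF Lph(3) LF p0(1)] Lp_diff[OF Lph(4) LG p0(1)] p0(1)]) (use c2 d2 in simp_all)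
  have eq1: "\<bar>\<theta> k x - (a * f x + b * g x)\<bar> = norm (a *\<^sub>R (\<phi> k x - f x) + b *\<^sub>R (\<psi> k x - g x))" for k x
    unfolding \<theta>_def by (simp add: algebra_simps)
  have eq2: "norm (grad (\<theta> k) x - (a *\<^sub>R F x + b *\<^sub>R G x)) = norm (a *\<^sub>R (grad (\<phi> k) x - F x) + b *\<^sub>R (grad (\<psi> k) x - G x))" for k x
  proof -
    have s1: "smooth_fun (\<phi> k)" "smooth_fun (\<psi> k)" using test_funD[OF \<phi>] test_funD[OF \<psi>] by metis+
    have "grad (\<theta> k) x = a *\<^sub>R grad (\<phi> k) x + b *\<^sub>R grad (\<psi> k) x"
      unfolding \<theta>_def[abs_def] by (rule grad_lin[OF s1])
    then show ?thesis by (simp add: algebra_simps)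
  qed
  have "(\<lambda>k. (\<integral>x. \<bar>\<theta> k x - (a * f x + b * g x)\<bar> powr p \<partial>?M)
            + (\<integral>x. norm (grad (\<theta> k) x - (a *\<^sub>R F x + b *\<^sub>R G x)) powr p \<partial>?M)) \<longlonglongrightarrow> 0"
    using tendsto_add[OF e1 e2] by (simp add: eq1 eq2)
  then show ?thesis unfolding W0_def using L1 L2 wlin t\<theta> by blast
qed



lemma powr_to0:
  fixes y :: "nat \<Rightarrow> real"
  assumes "(\<lambda>k. \<bar>y k\<bar> powr p) \<longlonglongrightarrow> 0" "0 < p"
  shows "y \<longlonglongrightarrow> 0"
proof -
  have "(\<lambda>k. (\<bar>y k\<bar> powr p) powr (1 / p)) \<longlonglongrightarrow> 0"
    by (rule tendsto_zero_powrI[OF assms(1) tendsto_const]) (use assms in auto)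
  moreover have "(\<bar>y k\<bar> powr p) powr (1 / p) = \<bar>y k\<bar>" for k
    using assms by (simp add: powr_powr)
  ultimately have "(\<lambda>k. \<bar>y k\<bar>) \<longlonglongrightarrow> 0" by simp
  then show ?thesis by (simp add: tendsto_rabs_zero_iff)
qed

lemma W0_comp:
  fixes D :: "'a::euclidean_space set"
  assumes D: "open D" "bounded D" and p: "1 \<le> p"
    and m: "smooth_real m" "m 0 = 0" and c: "0 \<le> c" and md: "\<And>r. 0 \<le> deriv m r \<and> deriv m r \<le> c"
    and h: "W0 D p h H"
  shows "W0 D p (\<lambda>x. m (h x)) (\<lambda>x. deriv m (h x) *\<^sub>R H x)"
proof -
  note DP = D_props[OF D]
  let ?M = "lebesgue_on D"
  have p0: "0 < p" "0 \<le> p" using p by auto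
  have mD: "(m has_real_derivative deriv m r) (at r)" for r by (rule smooth_real_DERIV[OF m(1)])
  have mlip: "\<bar>m a - m b\<bar> \<le> c * \<bar>a - b\<bar>" for a b by (rule mvt_lip[OF mD md])
  have cm: "continuous_on UNIV m"
    using mD by (meson DERIV_isCont continuous_at_imp_continuous_on)
  have cdm_at: "isCont (deriv m) r" for r
    using smooth_real_DERIV[OF smooth_real_deriv[OF m(1)]] by (rule DERIV_isCont)
  have cdm: "continuous_on UNIV (deriv m)" using cdm_at by (simp add: continuous_at_imp_continuous_on)
  have dmb: "\<bar>deriv m a - deriv m b\<bar> \<le> c" for a b using md[of a] md[of b] by linarith
  have dmb1: "\<bar>deriv m a\<bar> \<le> c" for a using md[of a] by simp
  obtain \<phi> where Lh: "Lp ?M p h" and LH: "Lp ?M p H" and wh: "weak_grad D h H"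
    and \<phi>: "\<And>k. test_fun D (\<phi> k)"
    and c1: "(\<lambda>k. \<integral>x. \<bar>\<phi> k x - h x\<bar> powr p \<partial>?M) \<longlonglongrightarrow> 0"
    and c2: "(\<lambda>k. \<integral>x. norm (grad (\<phi> k) x - H x) powr p \<partial>?M) \<longlonglongrightarrow> 0"
    using W0_parts[OF h] by blast
  have [measurable]: "h \<in> borel_measurable ?M" "H \<in> borel_measurable ?M" using Lh LH by (auto dest: Lp_meas)
  have mh_meas[measurable]: "(\<lambda>x. m (h x)) \<in> borel_measurable ?M"
    by (rule borel_measurable_continuous_on[OF cm]) simp
  have dmh_meas[measurable]: "(\<lambda>x. deriv m (h x)) \<in> borel_measurable ?M"
    by (rule borel_measurable_continuous_on[OF cdm]) simp
  have Lm: "Lp ?M p (\<lambda>x. m (h x))"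
  proof (rule Lp_bound[OF mh_meas Lh p0(1) _ c])
    show "norm (m (h x)) \<le> c * norm (h x)" for x using mlip[of "h x" 0] m(2) by simp
  qed
  have LmH: "Lp ?M p (\<lambda>x. deriv m (h x) *\<^sub>R H x)"
  proof (rule Lp_bound[OF _ LH p0(1) _ c])
    show "(\<lambda>x. deriv m (h x) *\<^sub>R H x) \<in> borel_measurable ?M" by measurable
    show "norm (deriv m (h x) *\<^sub>R H x) \<le> c * norm (H x)" for x
      using dmb1[of "h x"] by (simp add: mult_right_mono)
  qed
  have s\<phi>: "smooth_fun (\<phi> k)" for k using test_funD[OF \<phi>] by metis
  have Lph: "Lp ?M p (\<phi> k)" "Lp ?M p (grad (\<phi> k))" for k
    using tf_facts(1,2)[OF \<phi> D p0(2)] by auto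
  have [measurable]: "\<phi> k \<in> borel_measurable ?M" "grad (\<phi> k) \<in> borel_measurable ?M" for k
    using tf_facts(3,4)[OF \<phi> D p0(2)] by auto
  have "\<exists>r. strict_mono r \<and> (AE x in ?M. (\<lambda>k. \<bar>\<phi> (r k) x - h x\<bar> powr p) \<longlonglongrightarrow> 0)"
  proof -
    have "\<exists>r. strict_mono r \<and> (AE x in ?M. (\<lambda>k. (\<lambda>k x. \<bar>\<phi> k x - h x\<bar> powr p) (r k) x) \<longlonglongrightarrow> 0)"
    proof (rule tendsto_L1_AE_subseq)
      show "integrable ?M (\<lambda>x. \<bar>\<phi> k x - h x\<bar> powr p)" for k
        using Lp_int[OF Lp_diff[OF Lph(1) Lh p0(1)]] by simp
      show "(\<lambda>k. \<integral>x. norm (\<bar>\<phi> k x - h x\<bar> powr p) \<partial>?M) \<longlonglongrightarrow> 0" using c1 by simp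
    qed
    then show ?thesis by simp
  qed
  then obtain r where r: "strict_mono r" and ae0: "AE x in ?M. (\<lambda>k. \<bar>\<phi> (r k) x - h x\<bar> powr p) \<longlonglongrightarrow> 0"
    by blast
  have ae: "AE x in ?M. (\<lambda>k. \<phi> (r k) x) \<longlonglongrightarrow> h x"
    using ae0
  proof eventually_elim
    case (elim x)
    then have "(\<lambda>k. \<phi> (r k) x - h x) \<longlonglongrightarrow> 0" by (rule powr_to0[OF _ p0(1)])
    then show ?case by (simp add: LIM_zero_iff)
  qed
  have c1r: "(\<lambda>k. \<integral>x. \<bar>\<phi> (r k) x - h x\<bar> powr p \<partial>?M) \<longlonglongrightarrow> 0"
    using LIMSEQ_subseq_LIMSEQ[OF c1 r] by (simp add: o_def)
  have c2r: "(\<lambda>k. \<integral>x. norm (grad (\<phi> (r k)) x - H x) powr p \<partial>?M) \<longlonglongrightarrow> 0"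
    using LIMSEQ_subseq_LIMSEQ[OF c2 r] by (simp add: o_def)
  define \<psi> where "\<psi> k x = m (\<phi> (r k) x)" for k x
  have t\<psi>: "test_fun D (\<psi> k)" for k
  proof -
    obtain K where K: "smooth_fun (\<phi> (r k))" "compact K" "K \<subseteq> D" "\<And>x. x \<notin> K \<Longrightarrow> \<phi> (r k) x = 0"
      using test_funD[OF \<phi>] by blast
    show ?thesis unfolding test_fun_def \<psi>_def[abs_def]
      by (intro conjI smooth_fun_comp[OF m(1) K(1)] exI[of _ K]) (use K m(2) in auto)
  qed
  have s\<psi>: "smooth_fun (\<psi> k)" for k using test_funD[OF t\<psi>] by metis
  have g\<psi>: "grad (\<psi> k) x = deriv m (\<phi> (r k) x) *\<^sub>R grad (\<phi> (r k)) x" for k x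
    unfolding \<psi>_def[abs_def] by (rule grad_comp[OF m(1) s\<phi>])
  have L\<psi>: "Lp ?M p (\<psi> k)" "Lp ?M p (grad (\<psi> k))" for k
    using tf_facts(1,2)[OF t\<psi> D p0(2)] by auto
  have conv1: "(\<lambda>k. \<integral>x. \<bar>\<psi> k x - m (h x)\<bar> powr p \<partial>?M) \<longlonglongrightarrow> 0"
  proof (rule real_tendsto_sandwich)
    show "(\<lambda>k. 0) \<longlonglongrightarrow> (0::real)" by simp
    show "(\<lambda>k. c powr p * (\<integral>x. \<bar>\<phi> (r k) x - h x\<bar> powr p \<partial>?M)) \<longlonglongrightarrow> 0"
      using tendsto_mult_right_zero[OF c1r] by simp
    show "\<forall>\<^sub>F k in sequentially. 0 \<le> (\<integral>x. \<bar>\<psi> k x - m (h x)\<bar> powr p \<partial>?M)"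
      by (intro always_eventually allI integral_nonneg_AE) auto
    show "\<forall>\<^sub>F k in sequentially. (\<integral>x. \<bar>\<psi> k x - m (h x)\<bar> powr p \<partial>?M) \<le> c powr p * (\<integral>x. \<bar>\<phi> (r k) x - h x\<bar> powr p \<partial>?M)"
    proof (intro always_eventually allI)
      fix k
      have "(\<integral>x. \<bar>\<psi> k x - m (h x)\<bar> powr p \<partial>?M) \<le> (\<integral>x. c powr p * \<bar>\<phi> (r k) x - h x\<bar> powr p \<partial>?M)"
      proof (rule integral_mono)
        show "integrable ?M (\<lambda>x. \<bar>\<psi> k x - m (h x)\<bar> powr p)"
          using Lp_int[OF Lp_diff[OF L\<psi>(1) Lm p0(1)]] by simp
        show "integrable ?M (\<lambda>x. c powr p * \<bar>\<phi> (r k) x - h x\<bar> powr p)"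
          using Lp_int[OF Lp_diff[OF Lph(1) Lh p0(1)]] by simp
        show "\<bar>\<psi> k x - m (h x)\<bar> powr p \<le> c powr p * \<bar>\<phi> (r k) x - h x\<bar> powr p" for x
        proof -
          have "\<bar>\<psi> k x - m (h x)\<bar> powr p \<le> (c * \<bar>\<phi> (r k) x - h x\<bar>) powr p"
            unfolding \<psi>_def by (rule powr_mono2[OF p0(2) abs_ge_zero mlip])
          then show ?thesis using c by (simp add: powr_mult)
        qed
      qed
      then show "(\<integral>x. \<bar>\<psi> k x - m (h x)\<bar> powr p \<partial>?M) \<le> c powr p * (\<integral>x. \<bar>\<phi> (r k) x - h x\<bar> powr p \<partial>?M)"
        by simp
    qed
  qed
  define U where "U k x = deriv m (\<phi> (r k) x) *\<^sub>R (grad (\<phi> (r k)) x - H x)" for k x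
  define V where "V k x = (deriv m (\<phi> (r k) x) - deriv m (h x)) *\<^sub>R H x" for k x
  have dmphi_meas[measurable]: "(\<lambda>x. deriv m (\<phi> k x)) \<in> borel_measurable ?M" for k
    by (rule borel_measurable_continuous_on[OF cdm]) simp
  have LU: "Lp ?M p (U k)" for k
  proof (rule Lp_bound[OF _ Lp_diff[OF Lph(2) LH p0(1)] p0(1) _ c])
    show "U k \<in> borel_measurable ?M" unfolding U_def[abs_def] by measurable
    show "norm (U k x) \<le> c * norm (grad (\<phi> (r k)) x - H x)" for x
      unfolding U_def using dmb1 by (simp add: mult_right_mono)
  qed
  have LV: "Lp ?M p (V k)" for k
  proof (rule Lp_bound[OF _ LH p0(1) _ c])
    show "V k \<in> borel_measurable ?M" unfolding V_def[abs_def] by measurable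
    show "norm (V k x) \<le> c * norm (H x)" for x
      unfolding V_def using dmb by (simp add: mult_right_mono)
  qed
  have convU: "(\<lambda>k. \<integral>x. norm (U k x) powr p \<partial>?M) \<longlonglongrightarrow> 0"
  proof (rule real_tendsto_sandwich)
    show "(\<lambda>k. 0) \<longlonglongrightarrow> (0::real)" by simp
    show "(\<lambda>k. c powr p * (\<integral>x. norm (grad (\<phi> (r k)) x - H x) powr p \<partial>?M)) \<longlonglongrightarrow> 0"
      using tendsto_mult_right_zero[OF c2r] by simp
    show "\<forall>\<^sub>F k in sequentially. 0 \<le> (\<integral>x. norm (U k x) powr p \<partial>?M)"
      by (intro always_eventually allI integral_nonneg_AE) auto
    show "\<forall>\<^sub>F k in sequentially. (\<integral>x. norm (U k x) powr p \<partial>?M) \<le> c powr p * (\<integral>x. norm (grad (\<phi> (r k)) x - H x) powr p \<partial>?M)"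
    proof (intro always_eventually allI)
      fix k
      have "(\<integral>x. norm (U k x) powr p \<partial>?M) \<le> (\<integral>x. c powr p * norm (grad (\<phi> (r k)) x - H x) powr p \<partial>?M)"
      proof (rule integral_mono)
        show "integrable ?M (\<lambda>x. norm (U k x) powr p)" using Lp_int[OF LU] .
        show "integrable ?M (\<lambda>x. c powr p * norm (grad (\<phi> (r k)) x - H x) powr p)"
          using Lp_int[OF Lp_diff[OF Lph(2) LH p0(1)]] by simp
        show "norm (U k x) powr p \<le> c powr p * norm (grad (\<phi> (r k)) x - H x) powr p" for x
          unfolding U_def by (rule norm_scale_powr[OF p0(1) dmb1])
      qed
      then show "(\<integral>x. norm (U k x) powr p \<partial>?M) \<le> c powr p * (\<integral>x. norm (grad (\<phi> (r k)) x - H x) powr p \<partial>?M)"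
        by simp
    qed
  qed
  have convV: "(\<lambda>k. \<integral>x. norm (V k x) powr p \<partial>?M) \<longlonglongrightarrow> 0"
  proof -
    have "(\<lambda>k. \<integral>x. norm (V k x) powr p \<partial>?M) \<longlonglongrightarrow> (\<integral>x. 0 \<partial>?M)"
    proof (rule integral_dominated_convergence[where w = "\<lambda>x. c powr p * norm (H x) powr p"])
      show "(\<lambda>x. 0::real) \<in> borel_measurable ?M" by simp
      show "(\<lambda>x. norm (V k x) powr p) \<in> borel_measurable ?M" for k
        using Lp_meas[OF LV] by measurable
      show "integrable ?M (\<lambda>x. c powr p * norm (H x) powr p)" using Lp_int[OF LH] by simp
      show "AE x in ?M. (\<lambda>k. norm (V k x) powr p) \<longlonglongrightarrow> 0"
        using ae
      proof eventually_elim
        case (elim x)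
        have "(\<lambda>k. deriv m (\<phi> (r k) x)) \<longlonglongrightarrow> deriv m (h x)"
          by (rule isCont_tendsto_compose[OF cdm_at elim])
        then have "(\<lambda>k. V k x) \<longlonglongrightarrow> (deriv m (h x) - deriv m (h x)) *\<^sub>R H x"
          unfolding V_def by (intro tendsto_intros)
        then have "(\<lambda>k. norm (V k x)) \<longlonglongrightarrow> 0" using tendsto_norm_zero by fastforce
        then show ?case by (rule tendsto_zero_powrI[OF _ tendsto_const]) (use p0 in auto)
      qed
      show "AE x in ?M. norm (norm (V k x) powr p) \<le> c powr p * norm (H x) powr p" for k
        unfolding V_def using norm_scale_powr[OF p0(1) dmb] by (intro always_eventually allI) simp
    qed
    then show ?thesis by simp
  qed
  have conv2: "(\<lambda>k. \<integral>x. norm (grad (\<psi> k) x - deriv m (h x) *\<^sub>R H x) powr p \<partial>?M) \<longlonglongrightarrow> 0"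
  proof -
    have "(\<lambda>k. \<integral>x. norm (1 *\<^sub>R U k x + 1 *\<^sub>R V k x) powr p \<partial>?M) \<longlonglongrightarrow> 0"
      by (rule lin_conv[OF LU LV p0(1) convU convV])
    moreover have "grad (\<psi> k) x - deriv m (h x) *\<^sub>R H x = 1 *\<^sub>R U k x + 1 *\<^sub>R V k x" for k x
      unfolding g\<psi> U_def V_def by (simp add: algebra_simps)
    ultimately show ?thesis by simp
  qed
  have wcomp: "weak_grad D (\<lambda>x. m (h x)) (\<lambda>x. deriv m (h x) *\<^sub>R H x)"
    unfolding weak_grad_def
  proof (intro allI impI ballI)
    fix \<theta> :: "'a \<Rightarrow> real" and i :: 'a assume \<theta>: "test_fun D \<theta>" and i: "i \<in> Basis"
    obtain B1 where B1: "\<And>x. \<bar>frechet_derivative \<theta> (at x) i\<bar> \<le> B1" using tf_facts(6)[OF \<theta> D p0(2) i] by blast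
    obtain B2 where B2: "\<And>x. \<bar>\<theta> x\<bar> \<le> B2" using tf_facts(5)[OF \<theta> D p0(2)] by blast
    have m1: "(\<lambda>x. frechet_derivative \<theta> (at x) i) \<in> borel_measurable ?M" using tf_facts(7)[OF \<theta> D p0(2) i] .
    have m2: "\<theta> \<in> borel_measurable ?M" using tf_facts(3)[OF \<theta> D p0(2)] .
    have lim1: "(\<lambda>k. \<integral>x. \<psi> k x * frechet_derivative \<theta> (at x) i \<partial>?M) \<longlonglongrightarrow> (\<integral>x. m (h x) * frechet_derivative \<theta> (at x) i \<partial>?M)"
      by (rule conv_mult[OF DP(2) p L\<psi>(1) Lm conv1 m1 B1])
    have lim2: "(\<lambda>k. \<integral>x. (grad (\<psi> k) x \<bullet> i) * \<theta> x \<partial>?M) \<longlonglongrightarrow> (\<integral>x. ((deriv m (h x) *\<^sub>R H x) \<bullet> i) * \<theta> x \<partial>?M)"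
    proof (rule conv_mult[OF DP(2) p inner_Lp[OF L\<psi>(2) i p0(1)] inner_Lp[OF LmH i p0(1)] _ m2 B2])
      show "(\<lambda>k. \<integral>x. \<bar>grad (\<psi> k) x \<bullet> i - (deriv m (h x) *\<^sub>R H x) \<bullet> i\<bar> powr p \<partial>?M) \<longlonglongrightarrow> 0"
      proof (rule real_tendsto_sandwich[OF _ _ tendsto_const conv2])
        show "\<forall>\<^sub>F k in sequentially. 0 \<le> (\<integral>x. \<bar>grad (\<psi> k) x \<bullet> i - (deriv m (h x) *\<^sub>R H x) \<bullet> i\<bar> powr p \<partial>?M)"
          by (intro always_eventually allI integral_nonneg_AE) auto
        show "\<forall>\<^sub>F k in sequentially. (\<integral>x. \<bar>grad (\<psi> k) x \<bullet> i - (deriv m (h x) *\<^sub>R H x) \<bullet> i\<bar> powr p \<partial>?M)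
            \<le> (\<integral>x. norm (grad (\<psi> k) x - deriv m (h x) *\<^sub>R H x) powr p \<partial>?M)"
        proof (intro always_eventually allI integral_mono)
          fix k x
          show "integrable ?M (\<lambda>x. \<bar>grad (\<psi> k) x \<bullet> i - (deriv m (h x) *\<^sub>R H x) \<bullet> i\<bar> powr p)"
            using Lp_int[OF Lp_diff[OF inner_Lp[OF L\<psi>(2) i p0(1)] inner_Lp[OF LmH i p0(1)] p0(1)]] by simp
          show "integrable ?M (\<lambda>x. norm (grad (\<psi> k) x - deriv m (h x) *\<^sub>R H x) powr p)"
            using Lp_int[OF Lp_diff[OF L\<psi>(2) LmH p0(1)]] .
          have "\<bar>grad (\<psi> k) x \<bullet> i - (deriv m (h x) *\<^sub>R H x) \<bullet> i\<bar> \<le> norm (grad (\<psi> k) x - deriv m (h x) *\<^sub>R H x)"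
            using Basis_le_norm[OF i, of "grad (\<psi> k) x - deriv m (h x) *\<^sub>R H x"] by (simp add: inner_diff_left)
          then show "\<bar>grad (\<psi> k) x \<bullet> i - (deriv m (h x) *\<^sub>R H x) \<bullet> i\<bar> powr p \<le> norm (grad (\<psi> k) x - deriv m (h x) *\<^sub>R H x) powr p"
            by (rule powr_mono2[OF p0(2) abs_ge_zero])
        qed
      qed
    qed
    have eqk: "(\<integral>x. \<psi> k x * frechet_derivative \<theta> (at x) i \<partial>?M) = - (\<integral>x. (grad (\<psi> k) x \<bullet> i) * \<theta> x \<partial>?M)" for k
      using ibp_D[OF DP(1) s\<psi> \<theta> i] by (simp add: grad_inner[OF i])
    have "(\<lambda>k. \<integral>x. \<psi> k x * frechet_derivative \<theta> (at x) i \<partial>?M) \<longlonglongrightarrow> - (\<integral>x. ((deriv m (h x) *\<^sub>R H x) \<bullet> i) * \<theta> x \<partial>?M)"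
      unfolding eqk by (rule tendsto_minus[OF lim2])
    then show "(\<integral>x. m (h x) * frechet_derivative \<theta> (at x) i \<partial>?M) = - (\<integral>x. ((deriv m (h x) *\<^sub>R H x) \<bullet> i) * \<theta> x \<partial>?M)"
      using lim1 LIMSEQ_unique by blast
  qed
  have "(\<lambda>k. (\<integral>x. \<bar>\<psi> k x - m (h x)\<bar> powr p \<partial>?M)
            + (\<integral>x. norm (grad (\<psi> k) x - deriv m (h x) *\<^sub>R H x) powr p \<partial>?M)) \<longlonglongrightarrow> 0"
    using tendsto_add[OF conv1 conv2] by simp
  then show ?thesis unfolding W0_def using Lm LmH wcomp t\<psi> by blast
qed



lemma X_lin:
  fixes D :: "'a::euclidean_space set"
  assumes D: "open D" "bounded D" and p: "1 \<le> p"
    and u: "Xrep D T p u G" and v: "Xrep D T p v H"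
  shows "Xrep D T p (\<lambda>z. a * u z + b * v z) (\<lambda>z. a *\<^sub>R G z + b *\<^sub>R H z)"
proof -
  have p0: "0 < p" using p by simp
  have Lu: "Lp (lebesgue_on (QT T D)) p u" "Lp (lebesgue_on (QT T D)) p G"
    using u unfolding Xrep_def by auto
  have Lv: "Lp (lebesgue_on (QT T D)) p v" "Lp (lebesgue_on (QT T D)) p H"
    using v unfolding Xrep_def by auto
  have L1: "Lp (lebesgue_on (QT T D)) p (\<lambda>z. a * u z + b * v z)"
    using Lp_lin[OF Lu(1) Lv(1) p0, of a b] by simp
  have L2: "Lp (lebesgue_on (QT T D)) p (\<lambda>z. a *\<^sub>R G z + b *\<^sub>R H z)"
    using Lp_lin[OF Lu(2) Lv(2) p0, of a b] .
  have ae1: "AE t in lebesgue_on {0<..<T}. W0 D p (\<lambda>x. u (t, x)) (\<lambda>x. G (t, x))"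
    using u unfolding Xrep_def by blast
  have ae2: "AE t in lebesgue_on {0<..<T}. W0 D p (\<lambda>x. v (t, x)) (\<lambda>x. H (t, x))"
    using v unfolding Xrep_def by blast
  have "AE t in lebesgue_on {0<..<T}. W0 D p (\<lambda>x. a * u (t, x) + b * v (t, x)) (\<lambda>x. a *\<^sub>R G (t, x) + b *\<^sub>R H (t, x))"
    using ae1 ae2 by eventually_elim (rule W0_lin[OF D p])
  then show ?thesis unfolding Xrep_def using L1 L2 by simp
qed

lemma X_comp:
  fixes D :: "'a::euclidean_space set"
  assumes D: "open D" "bounded D" and p: "1 \<le> p"
    and m: "smooth_real m" "m 0 = 0" and c: "0 \<le> c" and md: "\<And>r. 0 \<le> deriv m r \<and> deriv m r \<le> c"
    and u: "Xrep D T p u G"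
  shows "Xrep D T p (\<lambda>z. m (u z)) (\<lambda>z. deriv m (u z) *\<^sub>R G z)"
proof -
  have p0: "0 < p" using p by simp
  have mD: "(m has_real_derivative deriv m r) (at r)" for r by (rule smooth_real_DERIV[OF m(1)])
  have mlip: "\<bar>m a - m b\<bar> \<le> c * \<bar>a - b\<bar>" for a b by (rule mvt_lip[OF mD md])
  have cm: "continuous_on UNIV m"
    using mD by (meson DERIV_isCont continuous_at_imp_continuous_on)
  have cdm: "continuous_on UNIV (deriv m)"
    using smooth_real_DERIV[OF smooth_real_deriv[OF m(1)]]
    by (meson DERIV_isCont continuous_at_imp_continuous_on)
  have Lu: "Lp (lebesgue_on (QT T D)) p u" and LG: "Lp (lebesgue_on (QT T D)) p G"
    using u unfolding Xrep_def by auto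
  have [measurable]: "u \<in> borel_measurable (lebesgue_on (QT T D))" "G \<in> borel_measurable (lebesgue_on (QT T D))"
    using Lu LG by (auto dest: Lp_meas)
  have mu[measurable]: "(\<lambda>z. m (u z)) \<in> borel_measurable (lebesgue_on (QT T D))"
    by (rule borel_measurable_continuous_on[OF cm]) simp
  have dmu[measurable]: "(\<lambda>z. deriv m (u z)) \<in> borel_measurable (lebesgue_on (QT T D))"
    by (rule borel_measurable_continuous_on[OF cdm]) simp
  have L1: "Lp (lebesgue_on (QT T D)) p (\<lambda>z. m (u z))"
  proof (rule Lp_bound[OF mu Lu p0 _ c])
    show "norm (m (u x)) \<le> c * norm (u x)" for x using mlip[of "u x" 0] m(2) by simp
  qed
  have L2: "Lp (lebesgue_on (QT T D)) p (\<lambda>z. deriv m (u z) *\<^sub>R G z)"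
  proof (rule Lp_bound[OF _ LG p0 _ c])
    show "(\<lambda>z. deriv m (u z) *\<^sub>R G z) \<in> borel_measurable (lebesgue_on (QT T D))" by measurable
    show "norm (deriv m (u x) *\<^sub>R G x) \<le> c * norm (G x)" for x
      using md[of "u x"] by (simp add: mult_right_mono)
  qed
  have ae1: "AE t in lebesgue_on {0<..<T}. W0 D p (\<lambda>x. u (t, x)) (\<lambda>x. G (t, x))"
    using u unfolding Xrep_def by blast
  have "AE t in lebesgue_on {0<..<T}. W0 D p (\<lambda>x. m (u (t, x))) (\<lambda>x. deriv m (u (t, x)) *\<^sub>R G (t, x))"
    using ae1 by eventually_elim (rule W0_comp[OF D p m c md])
  then show ?thesis unfolding Xrep_def using L1 L2 by simp
qed

theorem mainTheorem4:
  fixes D :: "'a::euclidean_space set"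
    and T p \<delta> C5 :: real
    and n :: "real \<Rightarrow> real"
    and u v :: "real \<times> 'a \<Rightarrow> real"
    and \<eta> :: "(real \<times> 'a \<Rightarrow> real) \<Rightarrow> real"
  assumes D: "lipschitz_domain D"
    and T: "T > 0"
    and p: "p \<ge> 2"
    and \<delta>: "\<delta> > 0"
    and n_smooth: "smooth_real n"
    and n_lin: "\<forall>r. r > \<delta> \<longrightarrow> n r = r - 2 * \<delta>"
    and n_even: "\<forall>r. n r = n (- r)"
    and n_d1: "\<forall>r. r \<ge> 0 \<longrightarrow> 0 \<le> deriv n r \<and> deriv n r \<le> 1"
    and C5: "C5 > 0"
    and n_d2: "\<forall>r. 0 \<le> deriv (deriv n) r \<and> deriv (deriv n) r \<le> C5 / \<delta>"
    and u: "Xmem D T p u" and v: "Xmem D T p v"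
    and u_nn: "AE z in lebesgue_on (QT T D). u z \<ge> 0"
    and v_nn: "AE z in lebesgue_on (QT T D). v z \<ge> 0"
    and \<eta>: "Xdual D T p \<eta>"
    and \<eta>_nn: "\<forall>\<phi>. Xmem D T p \<phi> \<and> (AE z in lebesgue_on (QT T D). \<phi> z \<ge> 0) \<longrightarrow> \<eta> \<phi> \<ge> 0"
    and \<eta>u: "\<eta> u = 0"
  shows "Xmem D T p (\<lambda>z. deriv n (u z - v z)) \<and> \<eta> (\<lambda>z. deriv n (u z - v z)) \<le> 0"
proof -
  have Do: "open D" "bounded D" using D unfolding lipschitz_domain_def by auto
  have p1: "1 \<le> p" using p by simp
  define m where "m = deriv n"
  define c where "c = C5 / \<delta>"
  have c0: "0 \<le> c" unfolding c_def using C5 \<delta> by simp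
  have ms: "smooth_real m" unfolding m_def by (rule smooth_real_deriv[OF n_smooth])
  have m0: "m 0 = 0" unfolding m_def by (rule even_deriv0[OF n_smooth n_even])
  have md: "\<And>r. 0 \<le> deriv m r \<and> deriv m r \<le> c" unfolding m_def c_def using n_d2 by blast
  have mD: "(m has_real_derivative deriv m r) (at r)" for r by (rule smooth_real_DERIV[OF ms])
  obtain Gu where Gu: "Xrep D T p u Gu" using u unfolding Xmem_def by blast
  obtain Gv where Gv: "Xrep D T p v Gv" using v unfolding Xmem_def by blast
  have "Xrep D T p (\<lambda>z. 1 * u z + (-1) * v z) (\<lambda>z. 1 *\<^sub>R Gu z + (-1) *\<^sub>R Gv z)"
    by (rule X_lin[OF Do p1 Gu Gv])
  then have "Xrep D T p (\<lambda>z. u z - v z) (\<lambda>z. Gu z - Gv z)" by simp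
  from X_comp[OF Do p1 ms m0 c0 md this]
  have Xw: "Xrep D T p (\<lambda>z. m (u z - v z)) (\<lambda>z. deriv m (u z - v z) *\<^sub>R (Gu z - Gv z))" .
  then have Mw: "Xmem D T p (\<lambda>z. m (u z - v z))" unfolding Xmem_def by blast
  have "Xrep D T p (\<lambda>z. c * u z + (-1) * m (u z - v z))
           (\<lambda>z. c *\<^sub>R Gu z + (-1) *\<^sub>R (deriv m (u z - v z) *\<^sub>R (Gu z - Gv z)))"
    by (rule X_lin[OF Do p1 Gu Xw])
  then have M\<phi>: "Xmem D T p (\<lambda>z. c * u z + (-1) * m (u z - v z))" unfolding Xmem_def by blast
  have "AE z in lebesgue_on (QT T D). c * u z + (-1) * m (u z - v z) \<ge> 0"
    using u_nn v_nn
  proof eventually_elim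
    case (elim z)
    have "m (u z - v z) \<le> m (u z)" by (rule mvt_mono[OF mD md]) (use elim in simp)
    also have "m (u z) \<le> c * u z" using mvt_lip[OF mD md, of "u z" 0] m0 elim by simp
    finally show ?case by simp
  qed
  then have "\<eta> (\<lambda>z. c * u z + (-1) * m (u z - v z)) \<ge> 0" using \<eta>_nn M\<phi> by blast
  moreover have "\<eta> (\<lambda>z. c * u z + (-1) * m (u z - v z)) = c * \<eta> u + (-1) * \<eta> (\<lambda>z. m (u z - v z))"
    using \<eta> u Mw unfolding Xdual_def by blast
  ultimately have "\<eta> (\<lambda>z. m (u z - v z)) \<le> 0" using \<eta>u by simp
  with Mw show ?thesis unfolding m_def by simp
qed


end
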